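(* (a) If $\mathbf s$ and $\mathbf s'$ are two different infinite supernatural numbers, then the ind-groups $\mathrm{GL}(\mathbf s)$ and $\mathrm{GL}(\mathbf s')$ are not isomorphic, and $\mathrm{SL}(\mathbf s)$ and $\mathrm{SL}(\mathbf s')$ are not isomorphic. (b) If $\mathbf s$ is an infinite supernatural number, then $\mathrm{GL}(\mathbf s)$ is not isomorphic to $\mathrm{GL}(\infty)$, and $\mathrm{SL}(\mathbf s)$ is not isomorphic to $\mathrm{SL}(\infty)$.
   Context: A supernatural number is a formal product $\mathbf s=\prod_{p\in\mathcal P}p^{\alpha_p}$ over a set $\mathcal P$ of primes with $\alpha_p\in\mathbb Z_{>0}\cup\{\infty\}$; it is infinite if some $\alpha_p=\infty$ or $\mathcal P$ is infinite. $\mathcal D(\mathbf s)$ is the set of its finite positive divisors. For positive integers $s\mid s'$, $\delta_{s,s'}:\mathrm{GL}(s)\to\mathrm{GL}(s')$ sends $x$ to $\mathrm{diag}(x,\dots,x)$ ($s'/s$ blocks). $\mathrm{GL}(\mathbf s)$ (resp. $\mathrm{SL}(\mathbf s)$) is the ind-group $\varinjlim_{s\in\mathcal D(\mathbf s)}\mathrm{GL}(s)$ (resp. $\varinjlim\mathrm{SL}(s)$) along the maps $\delta_{s,s'}$. $\mathrm{GL}(\infty)$ (resp. $\mathrm{SL}(\infty)$) is the ind-group $\varinjlim\mathrm{GL}(n)$ (resp. $\varinjlim\mathrm{SL}(n)$) along the standard embeddings $x\mapsto\begin{pmatrix}x&0\\0&1\end{pmatrix}$. Isomorphisms are isomorphisms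 of ind-groups. *)

theory Defs
  imports "Jordan_Normal_Form.Determinant" "HOL-Computational_Algebra.Polynomial"
    "HOL-Computational_Algebra.Primes" "HOL-Library.Extended_Nat"
begin

text \<open>A supernatural number is encoded by its exponent function alpha: alpha p is the
  exponent of the prime p (0 means p does not occur, \<infinity> allowed); non-primes get 0.\<close>

definition supernatural :: "(nat \<Rightarrow> enat) \<Rightarrow> bool" where
  "supernatural \<alpha> \<longleftrightarrow> (\<forall>p. \<not> prime p \<longrightarrow> \<alpha> p = 0)"

definition infinite_supernatural :: "(nat \<Rightarrow> enat) \<Rightarrow> bool" where
  "infinite_supernatural \<alpha> \<longleftrightarrow> (\<exists>p. prime p \<and> \<alpha> p = \<infinity>) \<or> infinite {p. prime p \<and> \<alpha> p \<noteq> 0}"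

definition sdivisors :: "(nat \<Rightarrow> enat) \<Rightarrow> nat set" where
  "sdivisors \<alpha> = {d. d > 0 \<and> (\<forall>p. prime p \<longrightarrow> enat (multiplicity p d) \<le> \<alpha> p)}"

definition GLm :: "nat \<Rightarrow> 'a::field mat set" where
  "GLm n = {A. A \<in> carrier_mat n n \<and> det A \<noteq> 0}"

definition SLm :: "nat \<Rightarrow> 'a::field mat set" where
  "SLm n = {A. A \<in> carrier_mat n n \<and> det A = 1}"

text \<open>delta_{n,m}: block diagonal with m/n copies of A.\<close>
definition diag_emb :: "nat \<Rightarrow> nat \<Rightarrow> 'a::field mat \<Rightarrow> 'a mat" where
  "diag_emb n m A = mat m m (\<lambda>(i, j). if i div n = j div n then A $$ (i mod n, j mod n) else 0)"

definition std_emb :: "nat \<Rightarrow> nat \<Rightarrow> 'a::field mat \<Rightarrow> 'a mat" where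
  "std_emb n m A = mat m m (\<lambda>(i, j). if i < n \<and> j < n then A $$ (i, j) else if i = j then 1 else 0)"

inductive_set poly_fun :: "nat \<Rightarrow> ('a::field mat \<Rightarrow> 'a) set" for n where
  pf_const: "(\<lambda>A. c) \<in> poly_fun n"
| pf_entry: "i < n \<Longrightarrow> j < n \<Longrightarrow> (\<lambda>A. A $$ (i, j)) \<in> poly_fun n"
| pf_add: "p \<in> poly_fun n \<Longrightarrow> q \<in> poly_fun n \<Longrightarrow> (\<lambda>A. p A + q A) \<in> poly_fun n"
| pf_mult: "p \<in> poly_fun n \<Longrightarrow> q \<in> poly_fun n \<Longrightarrow> (\<lambda>A. p A * q A) \<in> poly_fun n"

text \<open>Regular function on a subvariety X of GL(n): restriction of an element of
  k[x_ij][det^-1] = k[GL(n)].\<close>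
definition regular_on :: "nat \<Rightarrow> 'a::field mat set \<Rightarrow> ('a mat \<Rightarrow> 'a) \<Rightarrow> bool" where
  "regular_on n X f \<longleftrightarrow> (\<exists>p \<in> poly_fun n. \<exists>e::nat. \<forall>A\<in>X. f A = p A / det A ^ e)"

definition morphism_on :: "nat \<Rightarrow> 'a::field mat set \<Rightarrow> nat \<Rightarrow> 'a mat set \<Rightarrow> ('a mat \<Rightarrow> 'a mat) \<Rightarrow> bool" where
  "morphism_on n X m Y f \<longleftrightarrow> (\<forall>A\<in>X. f A \<in> Y) \<and>
     (\<forall>i<m. \<forall>j<m. regular_on n X (\<lambda>A. f A $$ (i, j)))"

record 'a mat_system =
  idx :: "nat set"
  le :: "nat \<Rightarrow> nat \<Rightarrow> bool"
  grp :: "nat \<Rightarrow> 'a mat set"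
  emb :: "nat \<Rightarrow> nat \<Rightarrow> 'a mat \<Rightarrow> 'a mat"

definition lim_carrier :: "'a mat_system \<Rightarrow> (nat \<times> 'a mat) set" where
  "lim_carrier S = {(n, A). n \<in> idx S \<and> A \<in> grp S n}"

definition lim_eq :: "'a mat_system \<Rightarrow> nat \<times> 'a mat \<Rightarrow> nat \<times> 'a mat \<Rightarrow> bool" where
  "lim_eq S x y \<longleftrightarrow> (\<exists>l \<in> idx S. le S (fst x) l \<and> le S (fst y) l \<and>
      emb S (fst x) l (snd x) = emb S (fst y) l (snd y))"

text \<open>Morphism of ind-varieties (on representatives), respecting the limit equality:
  each filtration piece G n is mapped by a morphism of varieties into some piece H m.\<close>
definition ind_morphism :: "'a::field mat_system \<Rightarrow> 'a mat_system \<Rightarrow> (nat \<times> 'a mat \<Rightarrow> nat \<times> 'a mat) \<Rightarrow> bool" where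
  "ind_morphism S T F \<longleftrightarrow>
     (\<forall>x \<in> lim_carrier S. F x \<in> lim_carrier T) \<and>
     (\<forall>x \<in> lim_carrier S. \<forall>y \<in> lim_carrier S. lim_eq S x y \<longrightarrow> lim_eq T (F x) (F y)) \<and>
     (\<forall>n \<in> idx S. \<exists>m \<in> idx T. \<exists>f. morphism_on n (grp S n) m (grp T m) f \<and>
         (\<forall>A \<in> grp S n. lim_eq T (F (n, A)) (m, f A)))"

text \<open>Group homomorphism of the direct limits (products computed at a common level).\<close>
definition ind_hom :: "'a::field mat_system \<Rightarrow> 'a mat_system \<Rightarrow> (nat \<times> 'a mat \<Rightarrow> nat \<times> 'a mat) \<Rightarrow> bool" where
  "ind_hom S T F \<longleftrightarrow>
     (\<forall>n \<in> idx S. \<forall>A \<in> grp S n. \<forall>B \<in> grp S n. \<exists>m \<in> idx T. \<exists>C D.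
        lim_eq T (F (n, A)) (m, C) \<and> lim_eq T (F (n, B)) (m, D) \<and>
        lim_eq T (F (n, A * B)) (m, C * D) \<and> C \<in> grp T m \<and> D \<in> grp T m)"

definition ind_group_iso :: "'a::field mat_system \<Rightarrow> 'a mat_system \<Rightarrow> bool" where
  "ind_group_iso S T \<longleftrightarrow> (\<exists>F G. ind_morphism S T F \<and> ind_morphism T S G \<and> ind_hom S T F \<and>
     (\<forall>x \<in> lim_carrier S. lim_eq S (G (F x)) x) \<and>
     (\<forall>y \<in> lim_carrier T. lim_eq T (F (G y)) y))"

definition GL_s :: "(nat \<Rightarrow> enat) \<Rightarrow> 'a::field mat_system" where
  "GL_s \<alpha> = \<lparr>idx = sdivisors \<alpha>, le = (dvd), grp = GLm, emb = diag_emb\<rparr>"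

definition SL_s :: "(nat \<Rightarrow> enat) \<Rightarrow> 'a::field mat_system" where
  "SL_s \<alpha> = \<lparr>idx = sdivisors \<alpha>, le = (dvd), grp = SLm, emb = diag_emb\<rparr>"

definition GL_inf :: "'a::field mat_system" where
  "GL_inf = \<lparr>idx = {n. n \<ge> 1}, le = (\<le>), grp = GLm, emb = std_emb\<rparr>"

definition SL_inf :: "'a::field mat_system" where
  "SL_inf = \<lparr>idx = {n. n \<ge> 1}, le = (\<le>), grp = SLm, emb = std_emb\<rparr>"

end

theory Submission
  imports Defs
begin

definition up :: "'a mat_system \<Rightarrow> nat \<Rightarrow> nat \<Rightarrow> nat" where
  "up S a b = (SOME c. c \<in> idx S \<and> le S a c \<and> le S b c)"

definition mul :: "'a::field mat_system \<Rightarrow> nat \<times> 'a mat \<Rightarrow> nat \<times> 'a mat \<Rightarrow> nat \<times> 'a mat" where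
  "mul S x y = (up S (fst x) (fst y),
     emb S (fst x) (up S (fst x) (fst y)) (snd x) * emb S (fst y) (up S (fst x) (fst y)) (snd y))"

definition central :: "'a::field mat_system \<Rightarrow> nat \<times> 'a mat \<Rightarrow> bool" where
  "central S x \<longleftrightarrow> x \<in> lim_carrier S \<and> (\<forall>y\<in>lim_carrier S. lim_eq S (mul S x y) (mul S y x))"

definition pw :: "nat \<times> 'a::field mat \<Rightarrow> nat \<Rightarrow> nat \<times> 'a mat" where
  "pw x k = (fst x, snd x ^\<^sub>m k)"

locale gsys =
  fixes S :: "'a::field mat_system"
  assumes g_refl: "n \<in> idx S \<Longrightarrow> le S n n"
  and g_trans: "a \<in> idx S \<Longrightarrow> b \<in> idx S \<Longrightarrow> c \<in> idx S \<Longrightarrow> le S a b \<Longrightarrow> le S b c \<Longrightarrow> le S a c"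
  and g_dir: "a \<in> idx S \<Longrightarrow> b \<in> idx S \<Longrightarrow> \<exists>c\<in>idx S. le S a c \<and> le S b c"
  and g_carr: "n \<in> idx S \<Longrightarrow> A \<in> grp S n \<Longrightarrow> A \<in> carrier_mat n n"
  and g_mult: "n \<in> idx S \<Longrightarrow> A \<in> grp S n \<Longrightarrow> B \<in> grp S n \<Longrightarrow> A * B \<in> grp S n"
  and g_id: "n \<in> idx S \<Longrightarrow> A \<in> grp S n \<Longrightarrow> emb S n n A = A"
  and g_emb: "n \<in> idx S \<Longrightarrow> l \<in> idx S \<Longrightarrow> le S n l \<Longrightarrow> A \<in> grp S n \<Longrightarrow> emb S n l A \<in> grp S l"
  and g_comp: "n \<in> idx S \<Longrightarrow> l \<in> idx S \<Longrightarrow> l' \<in> idx S \<Longrightarrow> le S n l \<Longrightarrow> le S l l' \<Longrightarrow> A \<in> grp S n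
  \<Longrightarrow> emb S l l' (emb S n l A) = emb S n l' A"
  and g_hom: "n \<in> idx S \<Longrightarrow> l \<in> idx S \<Longrightarrow> le S n l \<Longrightarrow> A \<in> grp S n \<Longrightarrow> B \<in> grp S n
  \<Longrightarrow> emb S n l (A * B) = emb S n l A * emb S n l B"
  and g_inj: "n \<in> idx S \<Longrightarrow> l \<in> idx S \<Longrightarrow> le S n l \<Longrightarrow> A \<in> grp S n \<Longrightarrow> B \<in> grp S n
  \<Longrightarrow> emb S n l A = emb S n l B \<Longrightarrow> A = B"
begin

lemma carrierD: "x \<in> lim_carrier S \<Longrightarrow> fst x \<in> idx S \<and> snd x \<in> grp S (fst x)"
  unfolding lim_carrier_def by auto

lemma carrierI: "n \<in> idx S \<Longrightarrow> A \<in> grp S n \<Longrightarrow> (n, A) \<in> lim_carrier S"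
  unfolding lim_carrier_def by auto

lemma up_props: assumes a: "a \<in> idx S" and b: "b \<in> idx S"
  shows "up S a b \<in> idx S \<and> le S a (up S a b) \<and> le S b (up S a b)"
proof -
  have "\<exists>c. c \<in> idx S \<and> le S a c \<and> le S b c" using g_dir[OF a b] by blast
  from someI_ex[OF this] show ?thesis unfolding up_def .
qed

lemma dir3: "a \<in> idx S \<Longrightarrow> b \<in> idx S \<Longrightarrow> c \<in> idx S \<Longrightarrow> \<exists>d\<in>idx S. le S a d \<and> le S b d \<and> le S c d"
proof -
  assume a: "a \<in> idx S" and b: "b \<in> idx S" and c: "c \<in> idx S"
  obtain e where e: "e \<in> idx S" "le S a e" "le S b e" using g_dir[OF a b] by blast
  obtain d where d: "d \<in> idx S" "le S e d" "le S c d" using g_dir[OF e(1) c] by blast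
  show ?thesis using d e g_trans a b c by blast
qed

lemma dir4: "a \<in> idx S \<Longrightarrow> b \<in> idx S \<Longrightarrow> c \<in> idx S \<Longrightarrow> c' \<in> idx S \<Longrightarrow>
   \<exists>d\<in>idx S. le S a d \<and> le S b d \<and> le S c d \<and> le S c' d"
proof -
  assume a: "a \<in> idx S" and b: "b \<in> idx S" and c: "c \<in> idx S" and c': "c' \<in> idx S"
  obtain e where e: "e \<in> idx S" "le S a e" "le S b e" "le S c e" using dir3[OF a b c] by blast
  obtain d where d: "d \<in> idx S" "le S e d" "le S c' d" using g_dir[OF e(1) c'] by blast
  have "le S a d" using g_trans[OF a e(1) d(1) e(2) d(2)] .
  moreover have "le S b d" using g_trans[OF b e(1) d(1) e(3) d(2)] .
  moreover have "le S c d" using g_trans[OF c e(1) d(1) e(4) d(2)] .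
  ultimately show ?thesis using d by blast
qed

lemma lift: assumes x: "x \<in> lim_carrier S" and l: "l \<in> idx S" "le S (fst x) l"
  shows "(l, emb S (fst x) l (snd x)) \<in> lim_carrier S \<and> lim_eq S x (l, emb S (fst x) l (snd x))"
proof
  have xs: "fst x \<in> idx S" "snd x \<in> grp S (fst x)" using carrierD[OF x] by auto
  have g: "emb S (fst x) l (snd x) \<in> grp S l" using g_emb[OF xs(1) l(1) l(2) xs(2)] .
  show "(l, emb S (fst x) l (snd x)) \<in> lim_carrier S" using carrierI[OF l(1) g] .
  have "emb S l l (emb S (fst x) l (snd x)) = emb S (fst x) l (snd x)" using g_id[OF l(1) g] .
  then show "lim_eq S x (l, emb S (fst x) l (snd x))" unfolding lim_eq_def using l g_refl[OF l(1)] by auto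
qed

lemma eq_strong:
  assumes x: "x \<in> lim_carrier S" and y: "y \<in> lim_carrier S" and e: "lim_eq S x y"
    and l: "l \<in> idx S" "le S (fst x) l" "le S (fst y) l"
  shows "emb S (fst x) l (snd x) = emb S (fst y) l (snd y)"
proof -
  obtain l0 where l0: "l0 \<in> idx S" "le S (fst x) l0" "le S (fst y) l0"
    "emb S (fst x) l0 (snd x) = emb S (fst y) l0 (snd y)" using e unfolding lim_eq_def by blast
  obtain l1 where l1: "l1 \<in> idx S" "le S l l1" "le S l0 l1" using g_dir[OF l(1) l0(1)] by blast
  have "emb S l l1 (emb S (fst x) l (snd x)) = emb S (fst x) l1 (snd x)"
    using g_comp carrierD[OF x] l l1 by blast
  also have "\<dots> = emb S l0 l1 (emb S (fst x) l0 (snd x))"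
    using g_comp carrierD[OF x] l0 l1 by metis
  also have "\<dots> = emb S l0 l1 (emb S (fst y) l0 (snd y))" using l0 by simp
  also have "\<dots> = emb S (fst y) l1 (snd y)"
    using g_comp carrierD[OF y] l0 l1 by metis
  also have "\<dots> = emb S l l1 (emb S (fst y) l (snd y))"
    using g_comp carrierD[OF y] l l1 by metis
  finally show ?thesis
    using g_inj[OF l(1) l1(1) l1(2)] g_emb carrierD[OF x] carrierD[OF y] l by blast
qed

lemma eq_sym: "lim_eq S x y \<Longrightarrow> lim_eq S y x"
  unfolding lim_eq_def by metis

lemma eq_refl: "x \<in> lim_carrier S \<Longrightarrow> lim_eq S x x"
  unfolding lim_eq_def using carrierD g_refl by blast

lemma eq_trans:
  assumes x: "x \<in> lim_carrier S" and y: "y \<in> lim_carrier S" and z: "z \<in> lim_carrier S"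
    and e1: "lim_eq S x y" and e2: "lim_eq S y z"
  shows "lim_eq S x z"
proof -
  obtain l where l: "l \<in> idx S" "le S (fst x) l" "le S (fst y) l" "le S (fst z) l"
    using dir3 carrierD[OF x] carrierD[OF y] carrierD[OF z] by blast
  have "emb S (fst x) l (snd x) = emb S (fst y) l (snd y)" using eq_strong[OF x y e1] l by blast
  also have "\<dots> = emb S (fst z) l (snd z)" using eq_strong[OF y z e2] l by blast
  finally show ?thesis unfolding lim_eq_def using l by blast
qed

lemma eq_same:
  assumes "(n, A) \<in> lim_carrier S" "(n, B) \<in> lim_carrier S" "lim_eq S (n, A) (n, B)"
  shows "A = B"
proof -
  have n: "n \<in> idx S" "A \<in> grp S n" "B \<in> grp S n" using assms carrierD by fastforce+
  show ?thesis using eq_strong[OF assms, of n] n g_refl g_id by force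
qed

lemma mul_carrier: "x \<in> lim_carrier S \<Longrightarrow> y \<in> lim_carrier S \<Longrightarrow> mul S x y \<in> lim_carrier S"
  unfolding mul_def using up_props carrierD g_emb g_mult carrierI by (metis fst_conv snd_conv)

lemma mul_at:
  assumes x: "x \<in> lim_carrier S" and y: "y \<in> lim_carrier S"
    and l: "l \<in> idx S" "le S (fst x) l" "le S (fst y) l"
  shows "lim_eq S (mul S x y) (l, emb S (fst x) l (snd x) * emb S (fst y) l (snd y))"
proof -
  let ?L = "up S (fst x) (fst y)"
  have L: "?L \<in> idx S" "le S (fst x) ?L" "le S (fst y) ?L" using up_props carrierD x y by blast+
  obtain l' where l': "l' \<in> idx S" "le S ?L l'" "le S l l'" using g_dir[OF L(1) l(1)] by blast
  have xs: "fst x \<in> idx S" "snd x \<in> grp S (fst x)" and ys: "fst y \<in> idx S" "snd y \<in> grp S (fst y)"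
    using carrierD x y by blast+
  have "emb S ?L l' (emb S (fst x) ?L (snd x) * emb S (fst y) ?L (snd y))
     = emb S ?L l' (emb S (fst x) ?L (snd x)) * emb S ?L l' (emb S (fst y) ?L (snd y))"
    using g_hom[OF L(1) l'(1) l'(2)] g_emb L xs ys by blast
  also have "\<dots> = emb S (fst x) l' (snd x) * emb S (fst y) l' (snd y)"
    using g_comp L l' xs ys by metis
  also have "\<dots> = emb S l l' (emb S (fst x) l (snd x)) * emb S l l' (emb S (fst y) l (snd y))"
    using g_comp l l' xs ys by metis
  also have "\<dots> = emb S l l' (emb S (fst x) l (snd x) * emb S (fst y) l (snd y))"
    using g_hom[OF l(1) l'(1) l'(3)] g_emb l xs ys by metis
  finally show ?thesis unfolding lim_eq_def mul_def using l' by auto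
qed

lemma mul_at_same:
  assumes "(n, A) \<in> lim_carrier S" "(n, B) \<in> lim_carrier S"
  shows "lim_eq S (mul S (n, A) (n, B)) (n, A * B)"
  using mul_at[OF assms, of n] assms carrierD g_refl g_id by force

lemma mul_cong:
  assumes x: "x \<in> lim_carrier S" and y: "y \<in> lim_carrier S"
    and x': "x' \<in> lim_carrier S" and y': "y' \<in> lim_carrier S"
    and ex: "lim_eq S x x'" and ey: "lim_eq S y y'"
  shows "lim_eq S (mul S x y) (mul S x' y')"
proof -
  obtain l where l: "l \<in> idx S" "le S (fst x) l" "le S (fst y) l" "le S (fst x') l" "le S (fst y') l"
    using dir4 carrierD x y x' y' by metis
  have c: "(l, emb S (fst x) l (snd x) * emb S (fst y) l (snd y)) \<in> lim_carrier S"
    using carrierD x y l g_emb g_mult carrierI by metis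
  have 1: "lim_eq S (mul S x y) (l, emb S (fst x) l (snd x) * emb S (fst y) l (snd y))"
    using mul_at x y l by blast
  have 2: "lim_eq S (mul S x' y') (l, emb S (fst x) l (snd x) * emb S (fst y) l (snd y))"
    using mul_at[OF x' y' l(1,4,5)] eq_strong[OF x x' ex] eq_strong[OF y y' ey] l by metis
  show ?thesis using eq_trans[OF mul_carrier[OF x y] c mul_carrier[OF x' y'] 1 eq_sym[OF 2]] .
qed

lemma central_cong:
  assumes c: "central S x" and x': "x' \<in> lim_carrier S" and e: "lim_eq S x x'"
  shows "central S x'"
  unfolding central_def
proof (intro conjI ballI x')
  fix y assume y: "y \<in> lim_carrier S"
  have x: "x \<in> lim_carrier S" using c central_def by blast
  have "lim_eq S (mul S x' y) (mul S x y)"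
    using mul_cong[OF x' y x y eq_sym[OF e] eq_refl[OF y]] .
  moreover have "lim_eq S (mul S x y) (mul S y x)" using c y central_def by blast
  moreover have "lim_eq S (mul S y x) (mul S y x')"
    using mul_cong[OF y x y x' eq_refl[OF y] e] .
  ultimately show "lim_eq S (mul S x' y) (mul S y x')"
    using eq_trans mul_carrier x y x' by metis
qed

lemma central_comm:
  assumes c: "central S (n, X)" and y: "(n, Y) \<in> lim_carrier S"
  shows "X * Y = Y * X"
proof -
  have x: "(n, X) \<in> lim_carrier S" using c central_def by blast
  have n: "n \<in> idx S" "X \<in> grp S n" "Y \<in> grp S n" using carrierD x y by auto
  have c1: "(n, X * Y) \<in> lim_carrier S" "(n, Y * X) \<in> lim_carrier S" using n g_mult carrierI by auto
  have "lim_eq S (mul S (n, X) (n, Y)) (mul S (n, Y) (n, X))" using c y central_def by blast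
  hence "lim_eq S (n, X * Y) (n, Y * X)"
    using eq_trans mul_at_same[OF x y] mul_at_same[OF y x] eq_sym c1 mul_carrier x y by metis
  thus ?thesis using eq_same c1 by blast
qed

lemma pw_carrier: "x \<in> lim_carrier S \<Longrightarrow> pw x (Suc k) \<in> lim_carrier S"
proof (induction k)
  case 0
  then show ?case using carrierD[OF 0] g_carr by (cases x) (auto simp: pw_def)
next
  case (Suc k)
  then show ?case using carrierD g_mult carrierI unfolding pw_def by (metis fst_conv pow_mat.simps(2) snd_conv)
qed

lemma pw_one: "x \<in> lim_carrier S \<Longrightarrow> pw x (Suc 0) = x"
  using carrierD g_carr by (cases x) (auto simp: pw_def)

lemma pw_Suc: assumes x: "x \<in> lim_carrier S"
  shows "lim_eq S (pw x (Suc (Suc k))) (mul S (pw x (Suc k)) x)"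
proof -
  obtain n X where xe: "x = (n, X)" by (cases x)
  have c1: "(n, X ^\<^sub>m Suc k) \<in> lim_carrier S" using pw_carrier[OF x, of k] xe by (simp add: pw_def)
  have "lim_eq S (mul S (n, X ^\<^sub>m Suc k) (n, X)) (n, X ^\<^sub>m Suc k * X)"
    using mul_at_same[OF c1] x xe by simp
  then show ?thesis using eq_sym xe by (simp add: pw_def)
qed

end

locale giso = S: gsys S + T: gsys T for S :: "'a::field mat_system" and T :: "'a mat_system" +
  fixes F G :: "nat \<times> 'a mat \<Rightarrow> nat \<times> 'a mat"
  assumes F_carr: "x \<in> lim_carrier S \<Longrightarrow> F x \<in> lim_carrier T"
  and G_carr: "y \<in> lim_carrier T \<Longrightarrow> G y \<in> lim_carrier S"
  and F_cong: "x \<in> lim_carrier S \<Longrightarrow> x' \<in> lim_carrier S \<Longrightarrow> lim_eq S x x' \<Longrightarrow> lim_eq T (F x) (F x')"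
  and G_cong: "y \<in> lim_carrier T \<Longrightarrow> y' \<in> lim_carrier T \<Longrightarrow> lim_eq T y y' \<Longrightarrow> lim_eq S (G y) (G y')"
  and GF: "x \<in> lim_carrier S \<Longrightarrow> lim_eq S (G (F x)) x"
  and FG: "y \<in> lim_carrier T \<Longrightarrow> lim_eq T (F (G y)) y"
  and F_hom: "ind_hom S T F"
begin

lemma F_inj:
  assumes x: "x \<in> lim_carrier S" and y: "y \<in> lim_carrier S" and e: "lim_eq T (F x) (F y)"
  shows "lim_eq S x y"
proof -
  have "lim_eq S (G (F x)) (G (F y))" using G_cong[OF F_carr[OF x] F_carr[OF y] e] .
  then show ?thesis
    using S.eq_trans S.eq_sym GF x y G_carr F_carr by metis
qed

lemma F_mul:
  assumes x: "x \<in> lim_carrier S" and y: "y \<in> lim_carrier S"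
  shows "lim_eq T (F (mul S x y)) (mul T (F x) (F y))"
proof -
  let ?L = "up S (fst x) (fst y)"
  let ?X = "emb S (fst x) ?L (snd x)" and ?Y = "emb S (fst y) ?L (snd y)"
  have L: "?L \<in> idx S" "le S (fst x) ?L" "le S (fst y) ?L"
    using S.up_props S.carrierD x y by blast+
  have lx: "(?L, ?X) \<in> lim_carrier S" "lim_eq S x (?L, ?X)" using S.lift[OF x L(1,2)] by auto
  have ly: "(?L, ?Y) \<in> lim_carrier S" "lim_eq S y (?L, ?Y)" using S.lift[OF y L(1,3)] by auto
  have gX: "?X \<in> grp S ?L" and gY: "?Y \<in> grp S ?L" using lx(1) ly(1) S.carrierD by auto
  obtain m C D where m: "m \<in> idx T" "lim_eq T (F (?L, ?X)) (m, C)" "lim_eq T (F (?L, ?Y)) (m, D)"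
    "lim_eq T (F (?L, ?X * ?Y)) (m, C * D)" "C \<in> grp T m" "D \<in> grp T m"
    using F_hom L(1) gX gY unfolding ind_hom_def by blast
  have mc: "(m, C) \<in> lim_carrier T" "(m, D) \<in> lim_carrier T" "(m, C * D) \<in> lim_carrier T"
    using m T.carrierI T.g_mult by auto
  have mxy: "mul S x y = (?L, ?X * ?Y)" unfolding mul_def by simp
  have cxy: "(?L, ?X * ?Y) \<in> lim_carrier S" using S.g_mult[OF L(1) gX gY] S.carrierI[OF L(1)] by blast
  have e1: "lim_eq T (F x) (m, C)"
    using T.eq_trans[OF F_carr[OF x] F_carr[OF lx(1)] mc(1) F_cong[OF x lx(1) lx(2)] m(2)] .
  have e2: "lim_eq T (F y) (m, D)"
    using T.eq_trans[OF F_carr[OF y] F_carr[OF ly(1)] mc(2) F_cong[OF y ly(1) ly(2)] m(3)] .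
  have e3: "lim_eq T (mul T (F x) (F y)) (m, C * D)"
    using T.eq_trans[OF T.mul_carrier[OF F_carr[OF x] F_carr[OF y]] T.mul_carrier[OF mc(1,2)] mc(3)
        T.mul_cong[OF F_carr[OF x] F_carr[OF y] mc(1,2) e1 e2] T.mul_at_same[OF mc(1,2)]] .
  show ?thesis unfolding mxy
    using T.eq_trans[OF F_carr[OF cxy] mc(3) T.mul_carrier[OF F_carr[OF x] F_carr[OF y]] m(4) T.eq_sym[OF e3]] .
qed

lemma central_F:
  assumes c: "central S x" shows "central T (F x)"
  unfolding central_def
proof (intro conjI ballI)
  have x: "x \<in> lim_carrier S" using c central_def by blast
  show fx: "F x \<in> lim_carrier T" using F_carr[OF x] .
  fix y assume y: "y \<in> lim_carrier T"
  have gy: "G y \<in> lim_carrier S" using G_carr[OF y] .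
  have fgy: "F (G y) \<in> lim_carrier T" using F_carr[OF gy] .
  have 1: "lim_eq T (mul T (F x) y) (mul T (F x) (F (G y)))"
    using T.mul_cong[OF fx y fx fgy T.eq_refl[OF fx] T.eq_sym[OF FG[OF y]]] .
  have 2: "lim_eq T (mul T (F x) (F (G y))) (F (mul S x (G y)))"
    using T.eq_sym[OF F_mul[OF x gy]] .
  have 3: "lim_eq T (F (mul S x (G y))) (F (mul S (G y) x))"
    using F_cong[OF S.mul_carrier[OF x gy] S.mul_carrier[OF gy x]] c gy central_def by blast
  have 4: "lim_eq T (F (mul S (G y) x)) (mul T (F (G y)) (F x))"
    using F_mul[OF gy x] .
  have 5: "lim_eq T (mul T (F (G y)) (F x)) (mul T y (F x))"
    using T.mul_cong[OF fgy fx y fx FG[OF y] T.eq_refl[OF fx]] .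
  have cs: "mul T (F x) y \<in> lim_carrier T" "mul T (F x) (F (G y)) \<in> lim_carrier T"
    "F (mul S x (G y)) \<in> lim_carrier T" "F (mul S (G y) x) \<in> lim_carrier T"
    "mul T (F (G y)) (F x) \<in> lim_carrier T" "mul T y (F x) \<in> lim_carrier T"
    using T.mul_carrier F_carr S.mul_carrier fx y fgy x gy by auto
  show "lim_eq T (mul T (F x) y) (mul T y (F x))"
    using T.eq_trans[OF cs(1) cs(5) cs(6)
      T.eq_trans[OF cs(1) cs(4) cs(5) T.eq_trans[OF cs(1) cs(3) cs(4)
        T.eq_trans[OF cs(1) cs(2) cs(3) 1 2] 3] 4] 5] .
qed

lemma central_G:
  assumes c: "central T y" shows "central S (G y)"
  unfolding central_def
proof (intro conjI ballI)
  have y: "y \<in> lim_carrier T" using c central_def by blast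
  show gy: "G y \<in> lim_carrier S" using G_carr[OF y] .
  have fgy: "F (G y) \<in> lim_carrier T" using F_carr[OF gy] .
  fix x assume x: "x \<in> lim_carrier S"
  have fx: "F x \<in> lim_carrier T" using F_carr[OF x] .
  have cs: "F (mul S (G y) x) \<in> lim_carrier T" "mul T (F (G y)) (F x) \<in> lim_carrier T"
    "mul T y (F x) \<in> lim_carrier T" "mul T (F x) y \<in> lim_carrier T"
    "mul T (F x) (F (G y)) \<in> lim_carrier T" "F (mul S x (G y)) \<in> lim_carrier T"
    using T.mul_carrier F_carr S.mul_carrier fx y fgy x gy by auto
  have 1: "lim_eq T (F (mul S (G y) x)) (mul T (F (G y)) (F x))" using F_mul[OF gy x] .
  have 2: "lim_eq T (mul T (F (G y)) (F x)) (mul T y (F x))"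
    using T.mul_cong[OF fgy fx y fx FG[OF y] T.eq_refl[OF fx]] .
  have 3: "lim_eq T (mul T y (F x)) (mul T (F x) y)" using c fx central_def T.eq_sym by blast
  have 4: "lim_eq T (mul T (F x) y) (mul T (F x) (F (G y)))"
    using T.mul_cong[OF fx y fx fgy T.eq_refl[OF fx] T.eq_sym[OF FG[OF y]]] .
  have 5: "lim_eq T (mul T (F x) (F (G y))) (F (mul S x (G y)))"
    using T.eq_sym[OF F_mul[OF x gy]] .
  have "lim_eq T (F (mul S (G y) x)) (F (mul S x (G y)))"
    using T.eq_trans[OF cs(1) cs(5) cs(6)
      T.eq_trans[OF cs(1) cs(4) cs(5) T.eq_trans[OF cs(1) cs(3) cs(4)
        T.eq_trans[OF cs(1) cs(2) cs(3) 1 2] 3] 4] 5] .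
  then show "lim_eq S (mul S (G y) x) (mul S x (G y))"
    using F_inj S.mul_carrier gy x by blast
qed

lemma pw_F:
  assumes x: "x \<in> lim_carrier S"
  shows "lim_eq T (F (pw x (Suc k))) (pw (F x) (Suc k))"
proof (induction k)
  case 0
  then show ?case using S.pw_one[OF x] T.pw_one[OF F_carr[OF x]] T.eq_refl F_carr x by simp
next
  case (Suc k)
  have fx: "F x \<in> lim_carrier T" using F_carr[OF x] .
  have cs: "F (pw x (Suc (Suc k))) \<in> lim_carrier T" "F (mul S (pw x (Suc k)) x) \<in> lim_carrier T"
     "mul T (F (pw x (Suc k))) (F x) \<in> lim_carrier T" "mul T (pw (F x) (Suc k)) (F x) \<in> lim_carrier T"
     "pw (F x) (Suc (Suc k)) \<in> lim_carrier T"
    using F_carr S.pw_carrier T.pw_carrier T.mul_carrier S.mul_carrier x fx by auto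
  have 1: "lim_eq T (F (pw x (Suc (Suc k)))) (F (mul S (pw x (Suc k)) x))"
    using F_cong[OF S.pw_carrier[OF x] S.mul_carrier[OF S.pw_carrier[OF x] x] S.pw_Suc[OF x]] .
  have 2: "lim_eq T (F (mul S (pw x (Suc k)) x)) (mul T (F (pw x (Suc k))) (F x))"
    using F_mul[OF S.pw_carrier[OF x] x] .
  have 3: "lim_eq T (mul T (F (pw x (Suc k))) (F x)) (mul T (pw (F x) (Suc k)) (F x))"
    using T.mul_cong[OF F_carr[OF S.pw_carrier[OF x]] fx T.pw_carrier[OF fx] fx Suc T.eq_refl[OF fx]] .
  have 4: "lim_eq T (mul T (pw (F x) (Suc k)) (F x)) (pw (F x) (Suc (Suc k)))"
    using T.eq_sym[OF T.pw_Suc[OF fx]] .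
  show ?case using T.eq_trans[OF cs(1) cs(4) cs(5) T.eq_trans[OF cs(1) cs(3) cs(4)
        T.eq_trans[OF cs(1) cs(2) cs(3) 1 2] 3] 4] .
qed

end

lemma giso_of:
  assumes gS: "gsys S" and gT: "gsys T" and i: "ind_group_iso S T"
  shows "\<exists>F G. giso S T F G"
proof -
  obtain F G where m1: "ind_morphism S T F" and m2: "ind_morphism T S G" and h: "ind_hom S T F"
    and gf: "\<forall>x \<in> lim_carrier S. lim_eq S (G (F x)) x"
    and fg: "\<forall>y \<in> lim_carrier T. lim_eq T (F (G y)) y"
    using i unfolding ind_group_iso_def by blast
  have "giso S T F G"
  proof (rule giso.intro[OF gS gT], unfold_locales)
    show "\<And>x. x \<in> lim_carrier S \<Longrightarrow> F x \<in> lim_carrier T" using m1 unfolding ind_morphism_def by blast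
    show "\<And>y. y \<in> lim_carrier T \<Longrightarrow> G y \<in> lim_carrier S" using m2 unfolding ind_morphism_def by blast
    show "\<And>x x'. x \<in> lim_carrier S \<Longrightarrow> x' \<in> lim_carrier S \<Longrightarrow> lim_eq S x x' \<Longrightarrow> lim_eq T (F x) (F x')"
      using m1 unfolding ind_morphism_def by blast
    show "\<And>y y'. y \<in> lim_carrier T \<Longrightarrow> y' \<in> lim_carrier T \<Longrightarrow> lim_eq T y y' \<Longrightarrow> lim_eq S (G y) (G y')"
      using m2 unfolding ind_morphism_def by blast
    show "\<And>x. x \<in> lim_carrier S \<Longrightarrow> lim_eq S (G (F x)) x" using gf by blast
    show "\<And>y. y \<in> lim_carrier T \<Longrightarrow> lim_eq T (F (G y)) y" using fg by blast
    show "ind_hom S T F" using h .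
  qed
  then show ?thesis by blast
qed

lemma diag_emb_carrier[simp]: "diag_emb n l A \<in> carrier_mat l l"
  unfolding diag_emb_def by simp

lemma diag_emb_dims[simp]: "dim_row (diag_emb n l A) = l" "dim_col (diag_emb n l A) = l"
  unfolding diag_emb_def by simp_all

lemma diag_emb_index: "i < l \<Longrightarrow> j < l \<Longrightarrow> diag_emb n l A $$ (i, j) =
   (if i div n = j div n then A $$ (i mod n, j mod n) else 0)"
  unfolding diag_emb_def by simp

lemma diag_emb_self: assumes "A \<in> carrier_mat n n" shows "diag_emb n n A = A"
  by (rule eq_matI) (use assms in \<open>auto simp: diag_emb_index\<close>)

lemma diag_emb_block:
  assumes n: "n > 0" and A: "A \<in> carrier_mat n n"
  shows "diag_emb n (n + m) A = four_block_mat A (0\<^sub>m n m) (0\<^sub>m m n) (diag_emb n m A)"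
proof (rule eq_matI)
  fix i j assume i: "i < dim_row (four_block_mat A (0\<^sub>m n m) (0\<^sub>m m n) (diag_emb n m A))"
    and j: "j < dim_col (four_block_mat A (0\<^sub>m n m) (0\<^sub>m m n) (diag_emb n m A))"
  have i': "i < n + m" and j': "j < n + m" using i j A by auto
  have d1: "i \<ge> n \<Longrightarrow> i div n = Suc ((i - n) div n)" using n by (simp add: le_div_geq)
  have d2: "j \<ge> n \<Longrightarrow> j div n = Suc ((j - n) div n)" using n by (simp add: le_div_geq)
  have m1: "i \<ge> n \<Longrightarrow> i mod n = (i - n) mod n" using n by (simp add: le_mod_geq)
  have m2: "j \<ge> n \<Longrightarrow> j mod n = (j - n) mod n" using n by (simp add: le_mod_geq)
  show "diag_emb n (n + m) A $$ (i, j) = four_block_mat A (0\<^sub>m n m) (0\<^sub>m m n) (diag_emb n m A) $$ (i, j)"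
    using A i' j' d1 d2 m1 m2 by (auto simp: diag_emb_index)
qed (use A in auto)

lemma diag_emb_zero: "diag_emb n 0 A = 1\<^sub>m 0"
  by (rule eq_matI) auto

lemma diag_emb_mult:
  assumes n: "n > 0" and A: "A \<in> carrier_mat n n" and B: "B \<in> carrier_mat n n"
  shows "diag_emb n (k * n) (A * B) = diag_emb n (k * n) A * diag_emb n (k * n) B"
proof (induction k)
  case 0
  then show ?case by (rule eq_matI) auto
next
  case (Suc k)
  have AB: "A * B \<in> carrier_mat n n" using A B by auto
  have e: "Suc k * n = n + k * n" by simp
  show ?case unfolding e diag_emb_block[OF n A] diag_emb_block[OF n B] diag_emb_block[OF n AB]
    by (subst mult_four_block_mat[of _ n n _ "k*n" _ "k*n"]) (use A B Suc in auto)
qed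

lemma diag_emb_det:
  assumes n: "n > 0" and A: "A \<in> carrier_mat n n"
  shows "det (diag_emb n (k * n) A) = det A ^ k"
proof (induction k)
  case 0
  then show ?case by (simp add: diag_emb_zero)
next
  case (Suc k)
  have e: "Suc k * n = n + k * n" by simp
  show ?case unfolding e diag_emb_block[OF n A]
    by (subst det_four_block_mat_lower_left_zero[of _ n _ "k*n"]) (use A Suc in auto)
qed

lemma diag_emb_comp:
  assumes n: "n > 0" and nl: "n dvd l" and ll: "l dvd l'" and l: "l > 0"
  shows "diag_emb l l' (diag_emb n l A) = diag_emb n l' A"
proof (rule eq_matI)
  fix i j assume i: "i < dim_row (diag_emb n l' A)" and j: "j < dim_col (diag_emb n l' A)"
  obtain q where q: "l = n * q" using nl by blast
  have q0: "q > 0" using l q by auto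
  have a: "i div l = i div n div q" "j div l = j div n div q" using q by (simp_all add: div_mult2_eq)
  have b: "(i mod l) div n = i div n mod q" "(j mod l) div n = j div n mod q"
    using q n by (simp_all add: mod_mult2_eq)
  have c: "(i mod l) mod n = i mod n" "(j mod l) mod n = j mod n" using nl by (simp_all add: mod_mod_cancel)
  have im: "i mod l < l" "j mod l < l" using l by auto
  have key: "(i div n div q = j div n div q \<and> i div n mod q = j div n mod q) = (i div n = j div n)"
    by (metis div_mod_decomp)
  show "diag_emb l l' (diag_emb n l A) $$ (i, j) = diag_emb n l' A $$ (i, j)"
    using i j im by (auto simp: diag_emb_index a b c key[symmetric])
qed simp_all

lemma diag_emb_inj:
  assumes n: "n \<le> l" and A: "A \<in> carrier_mat n n" and B: "B \<in> carrier_mat n n"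
    and e: "diag_emb n l A = diag_emb n l B"
  shows "A = B"
proof (rule eq_matI)
  fix i j assume i: "i < dim_row B" and j: "j < dim_col B"
  have "diag_emb n l A $$ (i, j) = diag_emb n l B $$ (i, j)" using e by simp
  then show "A $$ (i, j) = B $$ (i, j)" using i j n B by (auto simp: diag_emb_index)
qed (use A B in auto)

lemma diag_emb_smult_one:
  assumes n: "n > 0"
  shows "diag_emb n l (c \<cdot>\<^sub>m 1\<^sub>m n) = c \<cdot>\<^sub>m 1\<^sub>m l"
proof (rule eq_matI)
  fix i j assume i: "i < dim_row (c \<cdot>\<^sub>m 1\<^sub>m l)" and j: "j < dim_col (c \<cdot>\<^sub>m 1\<^sub>m l)"
  have "(i div n = j div n \<and> i mod n = j mod n) = (i = j)" by (metis div_mod_decomp)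
  then show "diag_emb n l (c \<cdot>\<^sub>m 1\<^sub>m n) $$ (i, j) = (c \<cdot>\<^sub>m 1\<^sub>m l) $$ (i, j)"
    using i j n by (auto simp: diag_emb_index)
qed auto

lemma std_emb_carrier[simp]: "std_emb n l A \<in> carrier_mat l l"
  unfolding std_emb_def by simp

lemma std_emb_dims[simp]: "dim_row (std_emb n l A) = l" "dim_col (std_emb n l A) = l"
  unfolding std_emb_def by simp_all

lemma std_emb_index: "i < l \<Longrightarrow> j < l \<Longrightarrow> std_emb n l A $$ (i, j) =
   (if i < n \<and> j < n then A $$ (i, j) else if i = j then 1 else 0)"
  unfolding std_emb_def by simp

lemma std_emb_self: assumes "A \<in> carrier_mat n n" shows "std_emb n n A = A"
  by (rule eq_matI) (use assms in \<open>auto simp: std_emb_index\<close>)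

lemma std_emb_block:
  assumes nl: "n \<le> l" and A: "A \<in> carrier_mat n n"
  shows "std_emb n l A = four_block_mat A (0\<^sub>m n (l - n)) (0\<^sub>m (l - n) n) (1\<^sub>m (l - n))"
proof (rule eq_matI)
  fix i j assume i: "i < dim_row (four_block_mat A (0\<^sub>m n (l - n)) (0\<^sub>m (l - n) n) (1\<^sub>m (l - n)))"
    and j: "j < dim_col (four_block_mat A (0\<^sub>m n (l - n)) (0\<^sub>m (l - n) n) (1\<^sub>m (l - n)))"
  have i': "i < l" and j': "j < l" using i j A nl by auto
  show "std_emb n l A $$ (i, j) = four_block_mat A (0\<^sub>m n (l - n)) (0\<^sub>m (l - n) n) (1\<^sub>m (l - n)) $$ (i, j)"
    using A i' j' nl by (auto simp: std_emb_index)
qed (use A nl in auto)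

lemma std_emb_mult:
  assumes nl: "n \<le> l" and A: "A \<in> carrier_mat n n" and B: "B \<in> carrier_mat n n"
  shows "std_emb n l (A * B) = std_emb n l A * std_emb n l B"
proof -
  have AB: "A * B \<in> carrier_mat n n" using A B by auto
  show ?thesis unfolding std_emb_block[OF nl A] std_emb_block[OF nl B] std_emb_block[OF nl AB]
    by (subst mult_four_block_mat[of _ n n _ "l - n" _ "l - n"]) (use A B in auto)
qed

lemma std_emb_det:
  assumes nl: "n \<le> l" and A: "A \<in> carrier_mat n n"
  shows "det (std_emb n l A) = det A"
  unfolding std_emb_block[OF nl A]
  by (subst det_four_block_mat_lower_left_zero[of _ n _ "l - n"]) (use A in auto)

lemma std_emb_comp:
  assumes "n \<le> l" "l \<le> l'"
  shows "std_emb l l' (std_emb n l A) = std_emb n l' A"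
  by (rule eq_matI) (use assms in \<open>auto simp: std_emb_index\<close>)

lemma std_emb_inj:
  assumes n: "n \<le> l" and A: "A \<in> carrier_mat n n" and B: "B \<in> carrier_mat n n"
    and e: "std_emb n l A = std_emb n l B"
  shows "A = B"
proof (rule eq_matI)
  fix i j assume i: "i < dim_row B" and j: "j < dim_col B"
  have "std_emb n l A $$ (i, j) = std_emb n l B $$ (i, j)" using e by simp
  then show "A $$ (i, j) = B $$ (i, j)" using i j n B by (auto simp: std_emb_index)
qed (use A B in auto)

lemma std_emb_one: "std_emb n l (1\<^sub>m n) = 1\<^sub>m l"
  by (rule eq_matI) (auto simp: std_emb_index)

lemma sdiv_pos: "n \<in> sdivisors \<alpha> \<Longrightarrow> n > 0" unfolding sdivisors_def by auto

lemma sdiv_lcm: assumes a: "a \<in> sdivisors \<alpha>" and b: "b \<in> sdivisors \<alpha>"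
  shows "lcm a b \<in> sdivisors \<alpha>"
proof -
  have a0: "a > 0" and b0: "b > 0" using a b sdiv_pos by auto
  have "lcm a b > 0" using a0 b0 by (simp add: lcm_pos_nat)
  moreover have "enat (multiplicity p (lcm a b)) \<le> \<alpha> p" if p: "prime p" for p
  proof -
    have "multiplicity p (lcm a b) = max (multiplicity p a) (multiplicity p b)"
      using multiplicity_lcm[of a b p] a0 b0 p by simp
    then show ?thesis using a b p unfolding sdivisors_def by (auto simp: max_def)
  qed
  ultimately show ?thesis unfolding sdivisors_def by auto
qed

lemma GLm_carr: "A \<in> GLm n \<Longrightarrow> A \<in> carrier_mat n n" unfolding GLm_def by auto
lemma SLm_carr: "A \<in> SLm n \<Longrightarrow> A \<in> carrier_mat n n" unfolding SLm_def by auto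

lemma GL_s_sel[simp]: "idx (GL_s \<alpha>) = sdivisors \<alpha>" "le (GL_s \<alpha>) = (dvd)" "grp (GL_s \<alpha>) = GLm"
  "emb (GL_s \<alpha>) = diag_emb" unfolding GL_s_def by simp_all
lemma SL_s_sel[simp]: "idx (SL_s \<alpha>) = sdivisors \<alpha>" "le (SL_s \<alpha>) = (dvd)" "grp (SL_s \<alpha>) = SLm"
  "emb (SL_s \<alpha>) = diag_emb" unfolding SL_s_def by simp_all
lemma GL_inf_sel[simp]: "idx GL_inf = {n. n \<ge> 1}" "le GL_inf = (\<le>)" "grp GL_inf = GLm"
  "emb GL_inf = std_emb" unfolding GL_inf_def by simp_all
lemma SL_inf_sel[simp]: "idx SL_inf = {n. n \<ge> 1}" "le SL_inf = (\<le>)" "grp SL_inf = SLm"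
  "emb SL_inf = std_emb" unfolding SL_inf_def by simp_all

lemma dvd_mult_form: assumes "(n::nat) dvd l" shows "\<exists>k. l = k * n"
proof -
  obtain k where "l = n * k" using assms by (rule dvdE)
  then show ?thesis by (intro exI[of _ k]) (simp add: mult.commute)
qed

lemma gsys_GL_s: "gsys (GL_s \<alpha> :: 'a::field mat_system)"
proof
  fix a b assume "a \<in> idx (GL_s \<alpha> :: 'a mat_system)" "b \<in> idx (GL_s \<alpha> :: 'a mat_system)"
  then show "\<exists>c\<in>idx (GL_s \<alpha> :: 'a mat_system). le (GL_s \<alpha> :: 'a mat_system) a c \<and> le (GL_s \<alpha> :: 'a mat_system) b c"
    using sdiv_lcm by fastforce
next
  fix n l and A :: "'a mat"
  assume n: "n \<in> idx (GL_s \<alpha> :: 'a mat_system)" and l: "l \<in> idx (GL_s \<alpha> :: 'a mat_system)"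
    and nl: "le (GL_s \<alpha> :: 'a mat_system) n l" and A: "A \<in> grp (GL_s \<alpha> :: 'a mat_system) n"
  obtain k where k: "l = k * n" using nl dvd_mult_form by auto
  have n': "n \<in> sdivisors \<alpha>" using n by simp
  have "det (diag_emb n l A) = det A ^ k" unfolding k using diag_emb_det[OF sdiv_pos[OF n'] GLm_carr] A by simp
  then show "emb (GL_s \<alpha>) n l A \<in> grp (GL_s \<alpha>) l" using A by (simp add: GLm_def)
next
  fix n l and A B :: "'a mat"
  assume n: "n \<in> idx (GL_s \<alpha> :: 'a mat_system)" and l: "l \<in> idx (GL_s \<alpha> :: 'a mat_system)"
    and nl: "le (GL_s \<alpha> :: 'a mat_system) n l" and A: "A \<in> grp (GL_s \<alpha> :: 'a mat_system) n"
    and B: "B \<in> grp (GL_s \<alpha> :: 'a mat_system) n"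
  obtain k where k: "l = k * n" using nl dvd_mult_form by auto
  show "emb (GL_s \<alpha>) n l (A * B) = emb (GL_s \<alpha>) n l A * emb (GL_s \<alpha>) n l B"
    unfolding k using diag_emb_mult[OF sdiv_pos GLm_carr GLm_carr] n A B by simp
  show "emb (GL_s \<alpha>) n l A = emb (GL_s \<alpha>) n l B \<Longrightarrow> A = B"
    using diag_emb_inj[of n l A B] A B GLm_carr nl sdiv_pos[of l] l dvd_imp_le by auto
next
  fix n l l' and A :: "'a mat"
  assume n: "n \<in> idx (GL_s \<alpha> :: 'a mat_system)" and l: "l \<in> idx (GL_s \<alpha> :: 'a mat_system)"
    and "le (GL_s \<alpha> :: 'a mat_system) n l" "le (GL_s \<alpha> :: 'a mat_system) l l'"
  then show "emb (GL_s \<alpha>) l l' (emb (GL_s \<alpha>) n l A) = emb (GL_s \<alpha>) n l' A"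
    using diag_emb_comp[OF sdiv_pos[of n \<alpha>] _ _ sdiv_pos[of l \<alpha>]] by simp
qed (auto simp: GLm_def det_mult diag_emb_self)

lemma gsys_SL_s: "gsys (SL_s \<alpha> :: 'a::field mat_system)"
proof
  fix a b assume "a \<in> idx (SL_s \<alpha> :: 'a mat_system)" "b \<in> idx (SL_s \<alpha> :: 'a mat_system)"
  then show "\<exists>c\<in>idx (SL_s \<alpha> :: 'a mat_system). le (SL_s \<alpha> :: 'a mat_system) a c \<and> le (SL_s \<alpha> :: 'a mat_system) b c"
    using sdiv_lcm by fastforce
next
  fix n l and A :: "'a mat"
  assume n: "n \<in> idx (SL_s \<alpha> :: 'a mat_system)" and l: "l \<in> idx (SL_s \<alpha> :: 'a mat_system)"
    and nl: "le (SL_s \<alpha> :: 'a mat_system) n l" and A: "A \<in> grp (SL_s \<alpha> :: 'a mat_system) n"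
  obtain k where k: "l = k * n" using nl dvd_mult_form by auto
  have n': "n \<in> sdivisors \<alpha>" using n by simp
  have "det (diag_emb n l A) = det A ^ k" unfolding k using diag_emb_det[OF sdiv_pos[OF n'] SLm_carr] A by simp
  then show "emb (SL_s \<alpha>) n l A \<in> grp (SL_s \<alpha>) l" using A by (simp add: SLm_def)
next
  fix n l and A B :: "'a mat"
  assume n: "n \<in> idx (SL_s \<alpha> :: 'a mat_system)" and l: "l \<in> idx (SL_s \<alpha> :: 'a mat_system)"
    and nl: "le (SL_s \<alpha> :: 'a mat_system) n l" and A: "A \<in> grp (SL_s \<alpha> :: 'a mat_system) n"
    and B: "B \<in> grp (SL_s \<alpha> :: 'a mat_system) n"
  obtain k where k: "l = k * n" using nl dvd_mult_form by auto
  show "emb (SL_s \<alpha>) n l (A * B) = emb (SL_s \<alpha>) n l A * emb (SL_s \<alpha>) n l B"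
    unfolding k using diag_emb_mult[OF sdiv_pos SLm_carr SLm_carr] n A B by simp
  show "emb (SL_s \<alpha>) n l A = emb (SL_s \<alpha>) n l B \<Longrightarrow> A = B"
    using diag_emb_inj[of n l A B] A B SLm_carr nl sdiv_pos[of l] l dvd_imp_le by auto
next
  fix n l l' and A :: "'a mat"
  assume n: "n \<in> idx (SL_s \<alpha> :: 'a mat_system)" and l: "l \<in> idx (SL_s \<alpha> :: 'a mat_system)"
    and "le (SL_s \<alpha> :: 'a mat_system) n l" "le (SL_s \<alpha> :: 'a mat_system) l l'"
  then show "emb (SL_s \<alpha>) l l' (emb (SL_s \<alpha>) n l A) = emb (SL_s \<alpha>) n l' A"
    using diag_emb_comp[OF sdiv_pos[of n \<alpha>] _ _ sdiv_pos[of l \<alpha>]] by simp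
qed (auto simp: SLm_def det_mult diag_emb_self)

lemma gsys_GL_inf: "gsys (GL_inf :: 'a::field mat_system)"
proof
  fix a b :: nat assume "a \<in> idx (GL_inf :: 'a mat_system)" "b \<in> idx (GL_inf :: 'a mat_system)"
  then show "\<exists>c\<in>idx (GL_inf :: 'a mat_system). le (GL_inf :: 'a mat_system) a c \<and> le (GL_inf :: 'a mat_system) b c"
    by (intro bexI[of _ "max a b"]) auto
next
  fix n l and A :: "'a mat"
  assume nl: "le (GL_inf :: 'a mat_system) n l" and A: "A \<in> grp (GL_inf :: 'a mat_system) n"
  have "det (std_emb n l A) = det A" using std_emb_det[of n l A] nl GLm_carr[of A] A by simp
  then show "emb GL_inf n l A \<in> grp GL_inf l" using A by (simp add: GLm_def)
next
  fix n l and A B :: "'a mat"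
  assume nl: "le (GL_inf :: 'a mat_system) n l" and A: "A \<in> grp (GL_inf :: 'a mat_system) n"
    and B: "B \<in> grp (GL_inf :: 'a mat_system) n"
  have nl': "n \<le> l" using nl by simp
  have A': "A \<in> carrier_mat n n" and B': "B \<in> carrier_mat n n" using A B GLm_carr by auto
  show "emb GL_inf n l (A * B) = emb GL_inf n l A * emb GL_inf n l B"
    using std_emb_mult[OF nl' A' B'] by simp
  show "emb GL_inf n l A = emb GL_inf n l B \<Longrightarrow> A = B"
    using std_emb_inj[OF nl' A' B'] by simp
next
  fix n l l' and A :: "'a mat"
  assume "le (GL_inf :: 'a mat_system) n l" "le (GL_inf :: 'a mat_system) l l'"
  then show "emb GL_inf l l' (emb GL_inf n l A) = emb GL_inf n l' A"
    using std_emb_comp by simp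
next
  fix n and A :: "'a mat"
  assume A: "A \<in> grp (GL_inf :: 'a mat_system) n"
  then show "emb GL_inf n n A = A" using std_emb_self[OF GLm_carr] by simp
next
  fix n and A B :: "'a mat"
  assume A: "A \<in> grp (GL_inf :: 'a mat_system) n" and B: "B \<in> grp (GL_inf :: 'a mat_system) n"
  then show "A * B \<in> grp GL_inf n" using det_mult[of A n B] by (auto simp: GLm_def)
qed (auto simp: GLm_def)

lemma gsys_SL_inf: "gsys (SL_inf :: 'a::field mat_system)"
proof
  fix a b :: nat assume "a \<in> idx (SL_inf :: 'a mat_system)" "b \<in> idx (SL_inf :: 'a mat_system)"
  then show "\<exists>c\<in>idx (SL_inf :: 'a mat_system). le (SL_inf :: 'a mat_system) a c \<and> le (SL_inf :: 'a mat_system) b c"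
    by (intro bexI[of _ "max a b"]) auto
next
  fix n l and A :: "'a mat"
  assume nl: "le (SL_inf :: 'a mat_system) n l" and A: "A \<in> grp (SL_inf :: 'a mat_system) n"
  have "det (std_emb n l A) = det A" using std_emb_det[of n l A] nl SLm_carr[of A] A by simp
  then show "emb SL_inf n l A \<in> grp SL_inf l" using A by (simp add: SLm_def)
next
  fix n l and A B :: "'a mat"
  assume nl: "le (SL_inf :: 'a mat_system) n l" and A: "A \<in> grp (SL_inf :: 'a mat_system) n"
    and B: "B \<in> grp (SL_inf :: 'a mat_system) n"
  have nl': "n \<le> l" using nl by simp
  have A': "A \<in> carrier_mat n n" and B': "B \<in> carrier_mat n n" using A B SLm_carr by auto
  show "emb SL_inf n l (A * B) = emb SL_inf n l A * emb SL_inf n l B"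
    using std_emb_mult[OF nl' A' B'] by simp
  show "emb SL_inf n l A = emb SL_inf n l B \<Longrightarrow> A = B"
    using std_emb_inj[OF nl' A' B'] by simp
next
  fix n l l' and A :: "'a mat"
  assume "le (SL_inf :: 'a mat_system) n l" "le (SL_inf :: 'a mat_system) l l'"
  then show "emb SL_inf l l' (emb SL_inf n l A) = emb SL_inf n l' A"
    using std_emb_comp by simp
next
  fix n and A :: "'a mat"
  assume A: "A \<in> grp (SL_inf :: 'a mat_system) n"
  then show "emb SL_inf n n A = A" using std_emb_self[OF SLm_carr] by simp
next
  fix n and A B :: "'a mat"
  assume A: "A \<in> grp (SL_inf :: 'a mat_system) n" and B: "B \<in> grp (SL_inf :: 'a mat_system) n"
  then show "A * B \<in> grp SL_inf n" using det_mult[of A n B] by (auto simp: SLm_def)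
qed (auto simp: SLm_def)

definition emat :: "nat \<Rightarrow> nat \<Rightarrow> nat \<Rightarrow> 'a::field mat" where
  "emat n i j = mat n n (\<lambda>(a, b). if a = b then 1 else if a = i \<and> b = j then 1 else 0)"

lemma emat_carrier[simp]: "emat n i j \<in> carrier_mat n n" unfolding emat_def by simp

lemma mult_entry:
  assumes "X \<in> carrier_mat n n" "M \<in> carrier_mat n n" "a < n" "b < n"
  shows "(X * M) $$ (a, b) = (\<Sum>k<n. X $$ (a, k) * M $$ (k, b))"
  using assms by (simp add: scalar_prod_def lessThan_atLeast0)

lemma emat_index: "i \<noteq> j \<Longrightarrow> a < n \<Longrightarrow> b < n \<Longrightarrow>
  emat n i j $$ (a, b) = (if a = b then 1 else 0) + (if a = i \<and> b = j then 1 else 0)"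
  unfolding emat_def by auto

lemma emat_right:
  assumes X: "X \<in> carrier_mat n n" and ij: "i \<noteq> j" "i < n" "j < n" and ab: "a < n" "b < n"
  shows "(X * emat n i j) $$ (a, b) = X $$ (a, b) + (if b = j then X $$ (a, i) else 0)"
proof -
  have "(X * emat n i j) $$ (a, b) = (\<Sum>k<n. X $$ (a, k) * emat n i j $$ (k, b))"
    using mult_entry[OF X emat_carrier ab] .
  also have "\<dots> = (\<Sum>k<n. (if k = b then X $$ (a, k) else 0) + (if k = i \<and> b = j then X $$ (a, k) else 0))"
    by (intro sum.cong refl) (use ij ab in \<open>auto simp: emat_index\<close>)
  also have "\<dots> = X $$ (a, b) + (if b = j then X $$ (a, i) else 0)"
    using ab ij by (simp add: sum.distrib)
  finally show ?thesis .
qed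

lemma emat_left:
  assumes X: "X \<in> carrier_mat n n" and ij: "i \<noteq> j" "i < n" "j < n" and ab: "a < n" "b < n"
  shows "(emat n i j * X) $$ (a, b) = X $$ (a, b) + (if a = i then X $$ (j, b) else 0)"
proof -
  have "(emat n i j * X) $$ (a, b) = (\<Sum>k<n. emat n i j $$ (a, k) * X $$ (k, b))"
    using mult_entry[OF emat_carrier X ab] .
  also have "\<dots> = (\<Sum>k<n. (if k = a then X $$ (k, b) else 0) + (if a = i \<and> k = j then X $$ (k, b) else 0))"
    by (intro sum.cong refl) (use ij ab in \<open>auto simp: emat_index\<close>)
  also have "\<dots> = X $$ (a, b) + (if a = i then X $$ (j, b) else 0)"
    using ab ij by (simp add: sum.distrib)
  finally show ?thesis .
qed

lemma center_mat:
  assumes X: "X \<in> carrier_mat n n" and n: "n > 0"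
    and comm: "\<And>i j. i < n \<Longrightarrow> j < n \<Longrightarrow> i \<noteq> j \<Longrightarrow> X * emat n i j = emat n i j * X"
  shows "X = X $$ (0, 0) \<cdot>\<^sub>m 1\<^sub>m n"
proof -
  have key: "(if b = j then X $$ (a, i) else 0) = (if a = i then X $$ (j, b) else 0)"
    if "i < n" "j < n" "i \<noteq> j" "a < n" "b < n" for i j a b
  proof -
    have "(X * emat n i j) $$ (a, b) = (emat n i j * X) $$ (a, b)" using comm that by simp
    then show ?thesis using emat_right[OF X, of i j a b] emat_left[OF X, of i j a b] that by simp
  qed
  show ?thesis
  proof (rule eq_matI)
    fix a b assume a: "a < dim_row (X $$ (0, 0) \<cdot>\<^sub>m 1\<^sub>m n)" and b: "b < dim_col (X $$ (0, 0) \<cdot>\<^sub>m 1\<^sub>m n)"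
    have a': "a < n" and b': "b < n" using a b by auto
    show "X $$ (a, b) = (X $$ (0, 0) \<cdot>\<^sub>m 1\<^sub>m n) $$ (a, b)"
    proof (cases "a = b")
      case True
      show ?thesis
      proof (cases "a = 0")
        case False
        have "X $$ (a, a) = X $$ (0, 0)" using key[of a 0 a 0] a' n False by simp
        then show ?thesis using True a' by simp
      qed (use True n in simp)
    next
      case False
      have "X $$ (a, b) = 0" using key[of b a a a] a' b' False by simp
      then show ?thesis using False a' b' by simp
    qed
  qed (use X in auto)
qed

lemma emat_det: assumes "i \<noteq> j" shows "det (emat n i j :: 'a::field mat) = 1"
proof -
  have d: "prod_list (diag_mat (emat n i j :: 'a mat)) = 1"
    unfolding prod_list_diag_prod by (intro prod.neutral) (auto simp: emat_def)
  show ?thesis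
  proof (cases "i < j")
    case True
    have ut: "upper_triangular (emat n i j :: 'a mat)" unfolding upper_triangular_def emat_def
      using True by auto
    show ?thesis using det_upper_triangular[OF ut emat_carrier] d by simp
  next
    case False
    then have ji: "j < i" using assms by simp
    have lt: "\<And>a b. a < b \<Longrightarrow> b < n \<Longrightarrow> (emat n i j :: 'a mat) $$ (a, b) = 0"
      using ji by (auto simp: emat_def)
    show ?thesis using det_lower_triangular[OF lt emat_carrier] d by simp
  qed
qed

lemma emat_GL: assumes ij: "i \<noteq> j" shows "(emat n i j :: 'a::field mat) \<in> GLm n"
proof -
  have d: "det (emat n i j :: 'a mat) = 1" by (rule emat_det[OF ij])
  show ?thesis unfolding GLm_def using d by simp
qed
lemma emat_SL: assumes ij: "i \<noteq> j" shows "(emat n i j :: 'a::field mat) \<in> SLm n"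
proof -
  have d: "det (emat n i j :: 'a mat) = 1" by (rule emat_det[OF ij])
  show ?thesis unfolding SLm_def using d by simp
qed

lemma central_scalar:
  assumes gs: "gsys S" and c: "central S (n, X)" and n: "n > 0"
    and em: "\<And>i j. i < n \<Longrightarrow> j < n \<Longrightarrow> i \<noteq> j \<Longrightarrow> emat n i j \<in> grp S n"
  shows "X = X $$ (0, 0) \<cdot>\<^sub>m 1\<^sub>m n"
proof -
  have x: "(n, X) \<in> lim_carrier S" using c central_def by blast
  have ni: "n \<in> idx S" and Xg: "X \<in> grp S n" using gsys.carrierD[OF gs x] by auto
  have X: "X \<in> carrier_mat n n" using gsys.g_carr[OF gs ni Xg] .
  show ?thesis
  proof (rule center_mat[OF X n])
    fix i j assume "i < n" "j < n" "i \<noteq> j"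
    then have "(n, emat n i j) \<in> lim_carrier S" using em gsys.carrierI[OF gs ni] by blast
    then show "X * emat n i j = emat n i j * X" using gsys.central_comm[OF gs c] by blast
  qed
qed

lemma smult_one_mult: "(Y :: 'a::field mat) \<in> carrier_mat l l \<Longrightarrow> (c \<cdot>\<^sub>m 1\<^sub>m l) * Y = c \<cdot>\<^sub>m Y"
  by (simp add: mult_smult_assoc_mat[of "1\<^sub>m l" l l Y l])

lemma mult_smult_one: "(Y :: 'a::field mat) \<in> carrier_mat l l \<Longrightarrow> Y * (c \<cdot>\<^sub>m 1\<^sub>m l) = c \<cdot>\<^sub>m Y"
  by (simp add: mult_smult_distrib[of Y l l "1\<^sub>m l" l])

lemma smult_one_pow: "(c \<cdot>\<^sub>m 1\<^sub>m n) ^\<^sub>m k = (c ^ k :: 'a::field) \<cdot>\<^sub>m 1\<^sub>m n"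
proof (induction k)
  case 0
  then show ?case by (rule eq_matI) auto
next
  case (Suc k)
  have "(c \<cdot>\<^sub>m 1\<^sub>m n) ^\<^sub>m Suc k = (c ^ k \<cdot>\<^sub>m 1\<^sub>m n) * (c \<cdot>\<^sub>m 1\<^sub>m n)" using Suc by simp
  also have "\<dots> = c ^ k \<cdot>\<^sub>m (c \<cdot>\<^sub>m 1\<^sub>m n)" by (rule smult_one_mult) simp
  also have "\<dots> = c ^ Suc k \<cdot>\<^sub>m 1\<^sub>m n" by (rule eq_matI) auto
  finally show ?case .
qed

lemma coprime_pow_one:
  fixes e :: "'a::field"
  assumes c: "coprime a b" and ea: "e ^ a = 1" and eb: "e ^ b = 1"
  shows "e = 1"
proof (cases "a = 0")
  case True
  then have "b = 1" using c by simp
  then show ?thesis using eb by simp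
next
  case False
  obtain x y where xy: "a * x = b * y + gcd a b" using bezout_nat[OF False] by blast
  have g: "gcd a b = 1" using c by simp
  have "1 = (e ^ a) ^ x" using ea by simp
  also have "\<dots> = e ^ (a * x)" by (simp add: power_mult)
  also have "\<dots> = (e ^ b) ^ y * e" using xy g by (simp add: power_add power_mult)
  also have "\<dots> = e" using eb by simp
  finally show ?thesis by simp
qed

lemma order_mult:
  fixes c :: "'a::field"
  assumes p: "prime p" and c1: "c ^ (p ^ Suc k) = 1" and c2: "c ^ (p ^ k) \<noteq> 1"
    and cl: "c ^ l = 1" and l: "l > 0"
  shows "Suc k \<le> multiplicity p l"
proof (rule ccontr)
  assume "\<not> Suc k \<le> multiplicity p l"
  then have mk: "multiplicity p l \<le> k" by simp
  define m where "m = multiplicity p l"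
  have l0: "l \<noteq> 0" and pu: "\<not> is_unit p" using l p not_prime_unit by auto
  obtain r where r0: "l = p ^ multiplicity p l * r" "\<not> p dvd r" using multiplicity_decompose'[OF l0 pu] by blast
  have r: "l = p ^ m * r" "\<not> p dvd r" using r0 m_def by auto
  define e where "e = c ^ (p ^ m)"
  have er: "e ^ r = 1" using cl r by (simp add: e_def power_mult)
  have "p ^ Suc k = p ^ m * p ^ (Suc k - m)" using mk m_def by (simp add: power_add[symmetric])
  then have ep: "e ^ (p ^ (Suc k - m)) = 1" using c1 by (simp add: e_def power_mult[symmetric])
  have "coprime r (p ^ (Suc k - m))"
    using prime_imp_coprime[OF p r(2)] by (simp add: coprime_commute)
  then have "e = 1" using coprime_pow_one er ep by blast
  have "p ^ k = p ^ m * p ^ (k - m)" using mk m_def by (simp add: power_add[symmetric])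
  then have "c ^ (p ^ k) = e ^ (p ^ (k - m))" by (simp add: e_def power_mult)
  also have "\<dots> = 1" using \<open>e = 1\<close> by simp
  finally show False using c2 by simp
qed

lemma prim_root_exists:
  assumes p: "prime p"
  shows "\<exists>z :: 'a :: {alg_closed_field, field_char_0}. z ^ (p ^ Suc k) = 1 \<and> z ^ (p ^ k) \<noteq> 1"
proof (induction k)
  case 0
  have p2: "p \<ge> 2" using p prime_ge_2_nat by blast
  define f :: "nat \<Rightarrow> 'a" where "f = (\<lambda>i. if i \<le> p - 1 then 1 else 0)"
  obtain x :: 'a where x: "(\<Sum>k\<le>p - 1. f k * x ^ k) = 0"
    using alg_closed[of "p - 1" f] p2 by (auto simp: f_def)
  have s: "(\<Sum>k<p. x ^ k) = 0"
  proof -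
    have "(\<Sum>k<p. x ^ k) = (\<Sum>k\<le>p - 1. f k * x ^ k)"
      using p2 by (intro sum.cong) (auto simp: f_def)
    then show ?thesis using x by simp
  qed
  have "x ^ p - 1 = (x - 1) * (\<Sum>i<p. x ^ i)" by (rule power_diff_1_eq)
  then have xp: "x ^ p = 1" using s by simp
  have "x \<noteq> 1"
  proof
    assume "x = 1"
    then have "(\<Sum>k<p. x ^ k) = of_nat p" by simp
    then show False using s p2 by simp
  qed
  then show ?case using xp by (intro exI[of _ x]) simp
next
  case (Suc k)
  then obtain z :: 'a where z: "z ^ (p ^ Suc k) = 1" "z ^ (p ^ k) \<noteq> 1" by blast
  have p0: "p > 0" using p prime_gt_0_nat by blast
  obtain y :: 'a where y: "y ^ p = z" using nth_root_exists[OF p0] by blast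
  have "y ^ (p ^ Suc (Suc k)) = (y ^ p) ^ (p ^ Suc k)" by (simp add: power_mult[symmetric] mult.commute)
  moreover have "y ^ (p ^ Suc k) = (y ^ p) ^ (p ^ k)" by (simp add: power_mult[symmetric] mult.commute)
  ultimately show ?case using y z by (intro exI[of _ y]) simp
qed

lemma ppow_sdiv:
  assumes p: "prime p" and le: "enat (Suc k) \<le> \<alpha> p"
  shows "p ^ Suc k \<in> sdivisors \<alpha>"
  unfolding sdivisors_def
proof (intro CollectI conjI allI impI)
  show "p ^ Suc k > 0" using p prime_gt_0_nat by simp
  fix q :: nat assume q: "prime q"
  show "enat (multiplicity q (p ^ Suc k)) \<le> \<alpha> q"
  proof (cases "q = p")
    case True
    have "multiplicity p (p ^ Suc k) = Suc k" using multiplicity_prime_power[of p "Suc k"] p by (simp add: prime_imp_prime_elem del: power_Suc)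
    then show ?thesis using le True by simp
  next
    case False
    then show ?thesis using multiplicity_distinct_prime_power[OF q p False, of "Suc k"] by (simp add: zero_enat_def[symmetric] del: power_Suc)
  qed
qed

definition eqc :: "'a::field mat_system \<Rightarrow> nat \<times> 'a mat \<Rightarrow> nat \<times> 'a mat \<Rightarrow> bool" where
  "eqc S x y \<longleftrightarrow> x \<in> lim_carrier S \<and> y \<in> lim_carrier S \<and> lim_eq S x y"

definition InvG :: "'a::field mat_system \<Rightarrow> nat \<times> 'a mat \<Rightarrow> bool" where
  "InvG S x \<longleftrightarrow> central S x \<and>
     (\<exists>a\<in>lim_carrier S. \<exists>b\<in>lim_carrier S. lim_eq S (mul S a b) (mul S x (mul S b a)))"

definition ordx :: "'a::field mat_system \<Rightarrow> nat \<times> 'a mat \<Rightarrow> nat \<Rightarrow> bool" where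
  "ordx S x N \<longleftrightarrow> lim_eq S (pw x (Suc N)) x"

context gsys
begin

lemma eqc_trans[trans]: "eqc S x y \<Longrightarrow> eqc S y z \<Longrightarrow> eqc S x z"
  unfolding eqc_def using eq_trans by blast

lemma eqc_sym: "eqc S x y \<Longrightarrow> eqc S y x"
  unfolding eqc_def using eq_sym by blast

lemma eqc_refl: "x \<in> lim_carrier S \<Longrightarrow> eqc S x x"
  unfolding eqc_def using eq_refl by blast

lemma eqcI: "x \<in> lim_carrier S \<Longrightarrow> y \<in> lim_carrier S \<Longrightarrow> lim_eq S x y \<Longrightarrow> eqc S x y"
  unfolding eqc_def by blast

lemma eqcD: "eqc S x y \<Longrightarrow> lim_eq S x y" "eqc S x y \<Longrightarrow> x \<in> lim_carrier S" "eqc S x y \<Longrightarrow> y \<in> lim_carrier S"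
  unfolding eqc_def by blast+

lemma mul_congc: "eqc S x x' \<Longrightarrow> eqc S y y' \<Longrightarrow> eqc S (mul S x y) (mul S x' y')"
  unfolding eqc_def using mul_cong mul_carrier by blast

lemma pw_cong:
  assumes e: "eqc S x x'"
  shows "eqc S (pw x (Suc k)) (pw x' (Suc k))"
proof (induction k)
  case 0
  then show ?case using e pw_one eqcD by simp
next
  case (Suc k)
  have x: "x \<in> lim_carrier S" and x': "x' \<in> lim_carrier S" using e eqcD by auto
  have "eqc S (pw x (Suc (Suc k))) (mul S (pw x (Suc k)) x)"
    using pw_Suc[OF x] pw_carrier[OF x] mul_carrier x by (intro eqcI) auto
  also have "eqc S (mul S (pw x (Suc k)) x) (mul S (pw x' (Suc k)) x')"
    using mul_congc[OF Suc e] .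
  also have "eqc S (mul S (pw x' (Suc k)) x') (pw x' (Suc (Suc k)))"
    using pw_Suc[OF x'] pw_carrier[OF x'] mul_carrier x' eq_sym by (intro eqcI) auto
  finally show ?case .
qed

end

context giso
begin

lemma F_eqc: "eqc S x y \<Longrightarrow> eqc T (F x) (F y)"
  using F_cong F_carr S.eqcD T.eqcI by metis

lemma F_mulc: "x \<in> lim_carrier S \<Longrightarrow> y \<in> lim_carrier S \<Longrightarrow> eqc T (F (mul S x y)) (mul T (F x) (F y))"
  using F_mul F_carr S.mul_carrier T.mul_carrier by (intro T.eqcI) auto

lemma FGc: "y \<in> lim_carrier T \<Longrightarrow> eqc T (F (G y)) y"
  using FG F_carr G_carr by (intro T.eqcI) auto

lemma InvG_F:
  assumes i: "InvG S x" shows "InvG T (F x)"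
proof -
  have c: "central S x" using i InvG_def by blast
  have x: "x \<in> lim_carrier S" using c central_def by blast
  obtain a b where a: "a \<in> lim_carrier S" and b: "b \<in> lim_carrier S"
    and e: "lim_eq S (mul S a b) (mul S x (mul S b a))" using i InvG_def by blast
  have "eqc T (mul T (F a) (F b)) (F (mul S a b))" using T.eqc_sym[OF F_mulc[OF a b]] .
  also have "eqc T (F (mul S a b)) (F (mul S x (mul S b a)))"
    using F_eqc S.eqcI e S.mul_carrier a b x by metis
  also have "eqc T (F (mul S x (mul S b a))) (mul T (F x) (F (mul S b a)))"
    using F_mulc x S.mul_carrier b a by blast
  also have "eqc T (mul T (F x) (F (mul S b a))) (mul T (F x) (mul T (F b) (F a)))"
    using T.mul_congc[OF T.eqc_refl[OF F_carr[OF x]] F_mulc[OF b a]] .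
  finally have "lim_eq T (mul T (F a) (F b)) (mul T (F x) (mul T (F b) (F a)))" using T.eqcD by blast
  then show ?thesis unfolding InvG_def using central_F[OF c] F_carr a b by blast
qed

lemma InvG_G:
  assumes i: "InvG T y" shows "InvG S (G y)"
proof -
  have c: "central T y" using i InvG_def by blast
  have y: "y \<in> lim_carrier T" using c central_def by blast
  obtain a' b' where a': "a' \<in> lim_carrier T" and b': "b' \<in> lim_carrier T"
    and e: "lim_eq T (mul T a' b') (mul T y (mul T b' a'))" using i InvG_def by blast
  let ?a = "G a'" and ?b = "G b'" and ?x = "G y"
  have a: "?a \<in> lim_carrier S" and b: "?b \<in> lim_carrier S" and x: "?x \<in> lim_carrier S"
    using G_carr a' b' y by auto
  have "eqc T (F (mul S ?a ?b)) (mul T (F ?a) (F ?b))" using F_mulc[OF a b] .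
  also have "eqc T (mul T (F ?a) (F ?b)) (mul T a' b')" using T.mul_congc[OF FGc[OF a'] FGc[OF b']] .
  also have "eqc T (mul T a' b') (mul T y (mul T b' a'))" using T.eqcI e T.mul_carrier a' b' y by metis
  also have "eqc T (mul T y (mul T b' a')) (mul T (F ?x) (mul T (F ?b) (F ?a)))"
    using T.mul_congc[OF T.eqc_sym[OF FGc[OF y]] T.mul_congc[OF T.eqc_sym[OF FGc[OF b']] T.eqc_sym[OF FGc[OF a']]]] .
  also have "eqc T (mul T (F ?x) (mul T (F ?b) (F ?a))) (mul T (F ?x) (F (mul S ?b ?a)))"
    using T.mul_congc[OF T.eqc_refl[OF F_carr[OF x]] T.eqc_sym[OF F_mulc[OF b a]]] .
  also have "eqc T (mul T (F ?x) (F (mul S ?b ?a))) (F (mul S ?x (mul S ?b ?a)))"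
    using T.eqc_sym[OF F_mulc[OF x S.mul_carrier[OF b a]]] .
  finally have "lim_eq S (mul S ?a ?b) (mul S ?x (mul S ?b ?a))"
    using F_inj S.mul_carrier a b x T.eqcD by metis
  then show ?thesis unfolding InvG_def using central_G[OF c] a b by blast
qed

lemma ord_F:
  assumes x: "x \<in> lim_carrier S" shows "ordx S x N \<longleftrightarrow> ordx T (F x) N"
proof
  assume o: "ordx S x N"
  have "eqc T (pw (F x) (Suc N)) (F (pw x (Suc N)))"
    using pw_F[OF x] F_carr x S.pw_carrier T.pw_carrier T.eq_sym by (intro T.eqcI) auto
  also have "eqc T (F (pw x (Suc N))) (F x)"
    using o unfolding ordx_def using F_eqc S.eqcI S.pw_carrier x by metis
  finally show "ordx T (F x) N" unfolding ordx_def using T.eqcD by blast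
next
  assume o: "ordx T (F x) N"
  have "eqc T (F (pw x (Suc N))) (pw (F x) (Suc N))"
    using pw_F[OF x] F_carr x S.pw_carrier T.pw_carrier by (intro T.eqcI) auto
  also have "eqc T (pw (F x) (Suc N)) (F x)"
    using o unfolding ordx_def using T.eqcI T.pw_carrier F_carr x by metis
  finally show "ordx S x N" unfolding ordx_def using F_inj S.pw_carrier x T.eqcD by blast
qed

lemma ord_G:
  assumes y: "y \<in> lim_carrier T" shows "ordx T y N \<longleftrightarrow> ordx S (G y) N"
proof -
  have gy: "G y \<in> lim_carrier S" using G_carr[OF y] .
  have "ordx T y N \<longleftrightarrow> ordx T (F (G y)) N"
  proof
    assume o: "ordx T y N"
    have "eqc T (pw (F (G y)) (Suc N)) (pw y (Suc N))" using T.pw_cong[OF FGc[OF y]] .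
    also have "eqc T (pw y (Suc N)) y" using o unfolding ordx_def using T.eqcI T.pw_carrier y by metis
    also have "eqc T y (F (G y))" using T.eqc_sym[OF FGc[OF y]] .
    finally show "ordx T (F (G y)) N" unfolding ordx_def using T.eqcD by blast
  next
    assume o: "ordx T (F (G y)) N"
    have "eqc T (pw y (Suc N)) (pw (F (G y)) (Suc N))" using T.pw_cong[OF T.eqc_sym[OF FGc[OF y]]] .
    also have "eqc T (pw (F (G y)) (Suc N)) (F (G y))"
      using o unfolding ordx_def using T.eqcI T.pw_carrier F_carr gy by metis
    also have "eqc T (F (G y)) y" using FGc[OF y] .
    finally show "ordx T y N" unfolding ordx_def using T.eqcD by blast
  qed
  also have "\<dots> \<longleftrightarrow> ordx S (G y) N" using ord_F[OF gy] by simp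
  finally show ?thesis .
qed

end

locale ssys = gsys S for S :: "'a::field mat_system" +
  fixes \<alpha> :: "nat \<Rightarrow> enat"
  assumes idxS: "idx S = sdivisors \<alpha>"
  and leS: "le S = (dvd)"
  and embS: "emb S = diag_emb"
  and emS: "i \<noteq> j \<Longrightarrow> emat n i j \<in> grp S n"
  and detS: "A \<in> grp S n \<Longrightarrow> det A \<noteq> 0"
  and scS: "c ^ n = 1 \<Longrightarrow> c \<cdot>\<^sub>m 1\<^sub>m n \<in> grp S n"
begin

lemma central_form:
  assumes c: "central S x"
  shows "\<exists>a. a \<noteq> 0 \<and> snd x = a \<cdot>\<^sub>m 1\<^sub>m (fst x)"
proof -
  obtain n X where xe: "x = (n, X)" by (cases x)
  have xc: "(n, X) \<in> lim_carrier S" using c xe central_def by blast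
  have n: "n \<in> idx S" and Xg: "X \<in> grp S n" using carrierD[OF xc] by auto
  have n0: "n > 0" using n idxS sdiv_pos by auto
  have X: "X = X $$ (0, 0) \<cdot>\<^sub>m 1\<^sub>m n"
    using central_scalar[OF gsys_axioms c[unfolded xe] n0] emS by blast
  have "det X \<noteq> 0" using detS Xg by blast
  moreover have "det (X $$ (0, 0) \<cdot>\<^sub>m 1\<^sub>m n) = X $$ (0, 0) ^ n" by simp
  ultimately have "X $$ (0, 0) \<noteq> 0" using X n0 by (metis zero_power)
  then show ?thesis using X xe by auto
qed

lemma scalar_central:
  assumes n: "n \<in> idx S" and g: "c \<cdot>\<^sub>m 1\<^sub>m n \<in> grp S n"
  shows "central S (n, c \<cdot>\<^sub>m 1\<^sub>m n)"
  unfolding central_def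
proof (intro conjI ballI)
  show x: "(n, c \<cdot>\<^sub>m 1\<^sub>m n) \<in> lim_carrier S" using carrierI[OF n g] .
  fix y assume y: "y \<in> lim_carrier S"
  have yi: "fst y \<in> idx S" "snd y \<in> grp S (fst y)" using carrierD[OF y] by auto
  obtain l where l: "l \<in> idx S" "le S n l" "le S (fst y) l" using g_dir[OF n yi(1)] by blast
  have n0: "n > 0" using n idxS sdiv_pos by auto
  let ?Y = "emb S (fst y) l (snd y)"
  have Yc: "?Y \<in> carrier_mat l l" using g_carr[OF l(1) g_emb[OF yi(1) l(1) l(3) yi(2)]] .
  have ex: "emb S n l (c \<cdot>\<^sub>m 1\<^sub>m n) = c \<cdot>\<^sub>m 1\<^sub>m l" using embS diag_emb_smult_one[OF n0] by simp
  have m1: "lim_eq S (mul S (n, c \<cdot>\<^sub>m 1\<^sub>m n) y) (l, c \<cdot>\<^sub>m ?Y)"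
    using mul_at[OF x y, of l] l ex smult_one_mult[OF Yc] by simp
  have m2: "lim_eq S (mul S y (n, c \<cdot>\<^sub>m 1\<^sub>m n)) (l, c \<cdot>\<^sub>m ?Y)"
    using mul_at[OF y x, of l] l ex mult_smult_one[OF Yc] by simp
  have "emb S n l (c \<cdot>\<^sub>m 1\<^sub>m n) * ?Y \<in> grp S l"
    using g_mult[OF l(1) g_emb[OF n l(1) l(2) g] g_emb[OF yi(1) l(1) l(3) yi(2)]] .
  then have cc: "(l, c \<cdot>\<^sub>m ?Y) \<in> lim_carrier S"
    using ex smult_one_mult[OF Yc] carrierI[OF l(1)] by simp
  show "lim_eq S (mul S (n, c \<cdot>\<^sub>m 1\<^sub>m n) y) (mul S y (n, c \<cdot>\<^sub>m 1\<^sub>m n))"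
    using eq_trans[OF mul_carrier[OF x y] cc mul_carrier[OF y x] m1 eq_sym[OF m2]] .
qed

lemma ord_scalar:
  assumes x: "(n, c \<cdot>\<^sub>m 1\<^sub>m n) \<in> lim_carrier S" and c0: "c \<noteq> 0"
  shows "ordx S (n, c \<cdot>\<^sub>m 1\<^sub>m n) N \<longleftrightarrow> c ^ N = 1"
proof -
  have n0: "n > 0" using carrierD[OF x] idxS sdiv_pos by auto
  have pe: "pw (n, c \<cdot>\<^sub>m 1\<^sub>m n) (Suc N) = (n, c ^ Suc N \<cdot>\<^sub>m 1\<^sub>m n)"
    by (simp only: pw_def fst_conv snd_conv smult_one_pow)
  have pc: "(n, c ^ Suc N \<cdot>\<^sub>m 1\<^sub>m n) \<in> lim_carrier S" using pw_carrier[OF x, of N] pe by simp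
  have "ordx S (n, c \<cdot>\<^sub>m 1\<^sub>m n) N \<longleftrightarrow> c ^ Suc N \<cdot>\<^sub>m 1\<^sub>m n = c \<cdot>\<^sub>m 1\<^sub>m n"
    unfolding ordx_def pe using eq_same[OF pc x] eq_refl[OF x] by auto
  also have "\<dots> \<longleftrightarrow> c ^ Suc N = c"
  proof
    assume "c ^ Suc N \<cdot>\<^sub>m 1\<^sub>m n = c \<cdot>\<^sub>m 1\<^sub>m n"
    then have "(c ^ Suc N \<cdot>\<^sub>m 1\<^sub>m n) $$ (0, 0) = (c \<cdot>\<^sub>m 1\<^sub>m n) $$ (0, 0)" by simp
    then show "c ^ Suc N = c" using n0 by (simp del: power_Suc)
  next
    assume h: "c ^ Suc N = c"
    show "c ^ Suc N \<cdot>\<^sub>m 1\<^sub>m n = c \<cdot>\<^sub>m 1\<^sub>m n" by (simp only: h)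
  qed
  also have "\<dots> \<longleftrightarrow> c ^ N = 1" using c0 by (simp add: mult.commute)
  finally show ?thesis .
qed

lemma InvG_tors:
  assumes i: "InvG S x"
  shows "\<exists>c l. c \<noteq> 0 \<and> snd x = c \<cdot>\<^sub>m 1\<^sub>m (fst x) \<and> l \<in> sdivisors \<alpha> \<and> c ^ l = 1"
proof -
  have cx: "central S x" using i InvG_def by blast
  obtain c where c0: "c \<noteq> 0" and xs: "snd x = c \<cdot>\<^sub>m 1\<^sub>m (fst x)" using central_form[OF cx] by blast
  obtain a b where a: "a \<in> lim_carrier S" and b: "b \<in> lim_carrier S"
    and e: "lim_eq S (mul S a b) (mul S x (mul S b a))" using i InvG_def by blast
  have x: "x \<in> lim_carrier S" using cx central_def by blast
  have xi: "fst x \<in> idx S" "snd x \<in> grp S (fst x)" using carrierD[OF x] by auto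
  have ai: "fst a \<in> idx S" "snd a \<in> grp S (fst a)" using carrierD[OF a] by auto
  have bi: "fst b \<in> idx S" "snd b \<in> grp S (fst b)" using carrierD[OF b] by auto
  obtain l where l: "l \<in> idx S" "le S (fst x) l" "le S (fst a) l" "le S (fst b) l"
    using dir3[OF xi(1) ai(1) bi(1)] by blast
  let ?A = "emb S (fst a) l (snd a)" and ?B = "emb S (fst b) l (snd b)"
  have Ag: "?A \<in> grp S l" and Bg: "?B \<in> grp S l" using g_emb l ai bi by auto
  have Ac: "?A \<in> carrier_mat l l" and Bc: "?B \<in> carrier_mat l l" using g_carr l(1) Ag Bg by auto
  have n0: "fst x > 0" using xi idxS sdiv_pos by auto
  have ex: "emb S (fst x) l (snd x) = c \<cdot>\<^sub>m 1\<^sub>m l" using embS xs diag_emb_smult_one[OF n0] by simp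
  have ABc: "(l, ?A * ?B) \<in> lim_carrier S" and BAc: "(l, ?B * ?A) \<in> lim_carrier S"
    using carrierI[OF l(1)] g_mult[OF l(1)] Ag Bg by auto
  have xl: "eqc S x (l, c \<cdot>\<^sub>m 1\<^sub>m l)" using lift[OF x l(1,2)] ex x by (auto intro: eqcI)
  have "eqc S (l, ?A * ?B) (mul S a b)"
    using eqcI[OF ABc mul_carrier[OF a b] eq_sym[OF mul_at[OF a b l(1,3,4)]]] .
  also have "eqc S (mul S a b) (mul S x (mul S b a))"
    using eqcI[OF mul_carrier[OF a b] mul_carrier[OF x mul_carrier[OF b a]] e] .
  also have "eqc S (mul S x (mul S b a)) (mul S (l, c \<cdot>\<^sub>m 1\<^sub>m l) (l, ?B * ?A))"
    using mul_congc[OF xl eqcI[OF mul_carrier[OF b a] BAc mul_at[OF b a l(1,4,3)]]] .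
  also have "eqc S (mul S (l, c \<cdot>\<^sub>m 1\<^sub>m l) (l, ?B * ?A)) (l, (c \<cdot>\<^sub>m 1\<^sub>m l) * (?B * ?A))"
  proof -
    have cl: "(l, c \<cdot>\<^sub>m 1\<^sub>m l) \<in> lim_carrier S" using xl eqcD by blast
    have "(l, (c \<cdot>\<^sub>m 1\<^sub>m l) * (?B * ?A)) \<in> lim_carrier S"
      using carrierD[OF cl] carrierD[OF BAc] g_mult carrierI by auto
    then show ?thesis using mul_at_same[OF cl BAc] mul_carrier[OF cl BAc] by (auto intro: eqcI)
  qed
  finally have "?A * ?B = (c \<cdot>\<^sub>m 1\<^sub>m l) * (?B * ?A)" using eq_same eqcD by blast
  also have "\<dots> = c \<cdot>\<^sub>m (?B * ?A)" using smult_one_mult Ac Bc by auto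
  finally have AB: "?A * ?B = c \<cdot>\<^sub>m (?B * ?A)" .
  have dA: "det ?A \<noteq> 0" and dB: "det ?B \<noteq> 0" using detS Ag Bg by auto
  have "det ?A * det ?B = c ^ l * (det ?B * det ?A)"
    using arg_cong[OF AB, of det] det_mult[OF Ac Bc] det_mult[OF Bc Ac] Ac Bc by simp
  then have cl: "c ^ l = 1" using dA dB by (simp add: mult.commute)
  have "l \<in> sdivisors \<alpha>" using l idxS by simp
  then show ?thesis using c0 xs cl by blast
qed

lemma bound:
  assumes x: "x \<in> lim_carrier S" and xs: "snd x = c \<cdot>\<^sub>m 1\<^sub>m (fst x)" and c0: "c \<noteq> 0"
    and l: "l \<in> sdivisors \<alpha>" and cl: "c ^ l = 1" and p: "prime p"
    and o1: "ordx S x (p ^ Suc k)" and o2: "\<not> ordx S x (p ^ k)"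
  shows "enat (Suc k) \<le> \<alpha> p"
proof -
  have x': "(fst x, c \<cdot>\<^sub>m 1\<^sub>m (fst x)) \<in> lim_carrier S" using x xs by (metis prod.collapse)
  have xe: "x = (fst x, c \<cdot>\<^sub>m 1\<^sub>m (fst x))" using xs by (metis prod.collapse)
  have "c ^ (p ^ Suc k) = 1" using o1 ord_scalar[OF x' c0] xe by metis
  moreover have "c ^ (p ^ k) \<noteq> 1" using o2 ord_scalar[OF x' c0] xe by metis
  ultimately have "Suc k \<le> multiplicity p l" using order_mult[OF p _ _ cl] sdiv_pos[OF l] by blast
  then show ?thesis using l p unfolding sdivisors_def by (auto intro: order_trans[rotated])
qed

end

lemma ssys_GL_s: "ssys (GL_s \<alpha> :: 'a::field mat_system) \<alpha>"
proof (rule ssys.intro[OF gsys_GL_s], unfold_locales)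
  fix i j n :: nat assume "i \<noteq> j"
  then show "emat n i j \<in> grp (GL_s \<alpha> :: 'a mat_system) n" using emat_GL by simp
next
  fix A :: "'a mat" and n assume "A \<in> grp (GL_s \<alpha> :: 'a mat_system) n"
  then show "det A \<noteq> 0" by (simp add: GLm_def)
next
  fix c :: 'a and n :: nat assume "c ^ n = 1"
  then show "c \<cdot>\<^sub>m 1\<^sub>m n \<in> grp (GL_s \<alpha> :: 'a mat_system) n" by (simp add: GLm_def)
qed simp_all

lemma ssys_SL_s: "ssys (SL_s \<alpha> :: 'a::field mat_system) \<alpha>"
proof (rule ssys.intro[OF gsys_SL_s], unfold_locales)
  fix i j n :: nat assume "i \<noteq> j"
  then show "emat n i j \<in> grp (SL_s \<alpha> :: 'a mat_system) n" using emat_SL by simp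
next
  fix A :: "'a mat" and n assume "A \<in> grp (SL_s \<alpha> :: 'a mat_system) n"
  then show "det A \<noteq> 0" by (simp add: SLm_def)
next
  fix c :: 'a and n :: nat assume "c ^ n = 1"
  then show "c \<cdot>\<^sub>m 1\<^sub>m n \<in> grp (SL_s \<alpha> :: 'a mat_system) n" by (simp add: SLm_def)
qed simp_all

lemma SL_tors:
  assumes c: "central (SL_s \<alpha> :: 'a::field mat_system) x"
  shows "\<exists>c l. c \<noteq> 0 \<and> snd x = c \<cdot>\<^sub>m 1\<^sub>m (fst x) \<and> l \<in> sdivisors \<alpha> \<and> c ^ l = 1"
proof -
  obtain d where d0: "d \<noteq> 0" and xs: "snd x = d \<cdot>\<^sub>m 1\<^sub>m (fst x)"
    using ssys.central_form[OF ssys_SL_s c] by blast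
  have x: "x \<in> lim_carrier (SL_s \<alpha> :: 'a mat_system)" using c central_def by blast
  have "fst x \<in> sdivisors \<alpha>" "snd x \<in> SLm (fst x)" using x unfolding lim_carrier_def by auto
  moreover then have "d ^ fst x = 1" using xs by (simp add: SLm_def)
  ultimately show ?thesis using d0 xs by blast
qed

lemma scalar_elem:
  fixes z :: "'a::field"
  assumes S: "ssys S \<alpha>" and N: "N \<in> sdivisors \<alpha>" and zN: "z ^ N = 1"
  shows "(N, z \<cdot>\<^sub>m 1\<^sub>m N) \<in> lim_carrier S \<and> central S (N, z \<cdot>\<^sub>m 1\<^sub>m N) \<and> z \<noteq> 0"
proof -
  have g: "z \<cdot>\<^sub>m 1\<^sub>m N \<in> grp S N" using ssys.scS[OF S zN] .
  have n: "N \<in> idx S" using ssys.idxS[OF S] N by simp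
  have "z \<noteq> 0" using zN sdiv_pos[OF N] by (metis zero_neq_one zero_power)
  then show ?thesis using gsys.carrierI[OF ssys.axioms(1)[OF S] n g] ssys.scalar_central[OF S n g] by blast
qed

lemma exist_central:
  fixes S :: "'a::{alg_closed_field, field_char_0} mat_system"
  assumes S: "ssys S \<alpha>" and p: "prime p" and le: "enat (Suc k) \<le> \<alpha> p"
  shows "\<exists>z. z ^ (p ^ Suc k) = 1 \<and> (p ^ Suc k, z \<cdot>\<^sub>m 1\<^sub>m (p ^ Suc k)) \<in> lim_carrier S \<and>
     central S (p ^ Suc k, z \<cdot>\<^sub>m 1\<^sub>m (p ^ Suc k)) \<and>
     ordx S (p ^ Suc k, z \<cdot>\<^sub>m 1\<^sub>m (p ^ Suc k)) (p ^ Suc k) \<and>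
     \<not> ordx S (p ^ Suc k, z \<cdot>\<^sub>m 1\<^sub>m (p ^ Suc k)) (p ^ k)"
proof -
  obtain z :: 'a where z: "z ^ (p ^ Suc k) = 1" "z ^ (p ^ k) \<noteq> 1" using prim_root_exists[OF p] by blast
  have N: "p ^ Suc k \<in> sdivisors \<alpha>" using ppow_sdiv[of p k \<alpha>] p le by blast
  have e: "(p ^ Suc k, z \<cdot>\<^sub>m 1\<^sub>m (p ^ Suc k)) \<in> lim_carrier S"
    "central S (p ^ Suc k, z \<cdot>\<^sub>m 1\<^sub>m (p ^ Suc k))" "z \<noteq> 0"
    using scalar_elem[OF S N z(1)] by auto
  show ?thesis using e z ssys.ord_scalar[OF S e(1) e(3)] by blast
qed

definition clk :: "nat \<Rightarrow> 'a::field \<Rightarrow> 'a mat" where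
  "clk N z = mat N N (\<lambda>(i, j). if i = j then z ^ i else 0)"
definition shf :: "nat \<Rightarrow> 'a::field mat" where
  "shf N = mat N N (\<lambda>(i, j). if j = Suc i mod N then 1 else 0)"
definition shf' :: "nat \<Rightarrow> 'a::field mat" where
  "shf' N = mat N N (\<lambda>(i, j). if i = Suc j mod N then 1 else 0)"

lemma clk_carrier[simp]: "clk N z \<in> carrier_mat N N" unfolding clk_def by simp
lemma shf_carrier[simp]: "shf N \<in> carrier_mat N N" unfolding shf_def by simp
lemma shf'_carrier[simp]: "shf' N \<in> carrier_mat N N" unfolding shf'_def by simp
lemma clk_dims[simp]: "dim_row (clk N z) = N" "dim_col (clk N z) = N" unfolding clk_def by simp_all
lemma shf_dims[simp]: "dim_row (shf N) = N" "dim_col (shf N) = N" unfolding shf_def by simp_all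
lemma shf'_dims[simp]: "dim_row (shf' N) = N" "dim_col (shf' N) = N" unfolding shf'_def by simp_all

lemma clk_left:
  assumes M: "M \<in> carrier_mat N N" and i: "i < N" and j: "j < N"
  shows "(clk N z * M) $$ (i, j) = z ^ i * M $$ (i, j)"
proof -
  have "(clk N z * M) $$ (i, j) = (\<Sum>k<N. clk N z $$ (i, k) * M $$ (k, j))"
    using mult_entry[OF clk_carrier M i j] .
  also have "\<dots> = (\<Sum>k<N. if k = i then z ^ i * M $$ (i, j) else 0)"
    by (intro sum.cong refl) (use i in \<open>auto simp: clk_def\<close>)
  also have "\<dots> = z ^ i * M $$ (i, j)" using i by simp
  finally show ?thesis .
qed

lemma clk_right:
  assumes M: "M \<in> carrier_mat N N" and i: "i < N" and j: "j < N"
  shows "(M * clk N z) $$ (i, j) = M $$ (i, j) * z ^ j"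
proof -
  have "(M * clk N z) $$ (i, j) = (\<Sum>k<N. M $$ (i, k) * clk N z $$ (k, j))"
    using mult_entry[OF M clk_carrier i j] .
  also have "\<dots> = (\<Sum>k<N. if k = j then M $$ (i, j) * z ^ j else 0)"
    by (intro sum.cong refl) (use j in \<open>auto simp: clk_def\<close>)
  also have "\<dots> = M $$ (i, j) * z ^ j" using j by simp
  finally show ?thesis .
qed

lemma pow_mod_eq: fixes z :: "'a::field" assumes "z ^ N = 1" shows "z ^ (m mod N) = z ^ m"
proof -
  have "z ^ m = z ^ (N * (m div N) + m mod N)" by simp
  also have "\<dots> = (z ^ N) ^ (m div N) * z ^ (m mod N)" by (simp only: power_add power_mult)
  finally show ?thesis using assms by simp
qed

lemma clk_shf:
  fixes z :: "'a::field"
  assumes zN: "z ^ N = 1"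
  shows "shf N * clk N z = z \<cdot>\<^sub>m (clk N z * shf N)"
proof (rule eq_matI)
  fix i j assume i: "i < dim_row (z \<cdot>\<^sub>m (clk N z * shf N))" and j: "j < dim_col (z \<cdot>\<^sub>m (clk N z * shf N))"
  have i': "i < N" and j': "j < N" using i j by auto
  have "(shf N * clk N z) $$ (i, j) = shf N $$ (i, j) * z ^ j" using clk_right[OF shf_carrier i' j'] .
  also have "\<dots> = z * (z ^ i * shf N $$ (i, j))"
    using i' j' pow_mod_eq[OF zN, of "Suc i"] by (auto simp: shf_def)
  also have "\<dots> = z * (clk N z * shf N) $$ (i, j)" using clk_left[OF shf_carrier i' j', of z] by simp
  also have "\<dots> = (z \<cdot>\<^sub>m (clk N z * shf N)) $$ (i, j)"
    by (rule index_smult_mat(1)[symmetric]) (use i' j' in simp_all)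
  finally show "(shf N * clk N z) $$ (i, j) = (z \<cdot>\<^sub>m (clk N z * shf N)) $$ (i, j)" .
qed auto

lemma suc_mod_char: "i < N \<Longrightarrow> Suc i mod N = (if Suc i = N then 0 else Suc i)"
  by auto

lemma shf_inv: "shf N * shf' N = (1\<^sub>m N :: 'a::field mat)"
proof (rule eq_matI)
  fix i j assume i: "i < dim_row (1\<^sub>m N :: 'a mat)" and j: "j < dim_col (1\<^sub>m N :: 'a mat)"
  have i': "i < N" and j': "j < N" using i j by auto
  have "(shf N * shf' N) $$ (i, j) = (\<Sum>k<N. (shf N :: 'a mat) $$ (i, k) * shf' N $$ (k, j))"
    using mult_entry[OF shf_carrier shf'_carrier i' j'] .
  also have "\<dots> = (\<Sum>k<N. if k = Suc i mod N then (if Suc i mod N = Suc j mod N then 1 else 0) else 0)"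
    by (intro sum.cong refl) (use i' j' in \<open>auto simp: shf_def shf'_def\<close>)
  also have "\<dots> = (if Suc i mod N = Suc j mod N then 1 else 0)" using i' by simp
  also have "\<dots> = (1\<^sub>m N :: 'a mat) $$ (i, j)"
    using i' j' by (auto simp: suc_mod_char split: if_splits)
  finally show "(shf N * shf' N) $$ (i, j) = (1\<^sub>m N :: 'a mat) $$ (i, j)" .
qed auto

lemma shf_GL: "(shf N :: 'a::field mat) \<in> GLm N"
proof -
  have "det (shf N :: 'a mat) * det (shf' N :: 'a mat) = 1"
    using det_mult[OF shf_carrier shf'_carrier, of N] shf_inv[of N] by (metis det_one)
  then show ?thesis unfolding GLm_def by auto
qed

lemma clk_GL:
  fixes z :: "'a::field" assumes z0: "z \<noteq> 0" shows "clk N z \<in> GLm N"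
proof -
  have ut: "upper_triangular (clk N z)" unfolding upper_triangular_def clk_def by auto
  have "det (clk N z) = prod_list (diag_mat (clk N z))" using det_upper_triangular[OF ut clk_carrier] .
  also have "\<dots> = (\<Prod>i = 0..<N. z ^ i)" unfolding prod_list_diag_prod by (intro prod.cong) (auto simp: clk_def)
  finally have "det (clk N z) \<noteq> 0" using z0 by simp
  then show ?thesis unfolding GLm_def by simp
qed

lemma eqc_trans_GL[trans]: "eqc (GL_s \<alpha>) x y \<Longrightarrow> eqc (GL_s \<alpha>) y z \<Longrightarrow> eqc (GL_s \<alpha>) x z"
  using gsys.eqc_trans[OF gsys_GL_s] by blast

lemma exist_InvG:
  fixes z :: "'a::field"
  assumes N: "N \<in> sdivisors \<alpha>" and zN: "z ^ N = 1"
  shows "InvG (GL_s \<alpha>) (N, z \<cdot>\<^sub>m 1\<^sub>m N)"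
proof -
  let ?S = "GL_s \<alpha> :: 'a mat_system"
  have S: "ssys ?S \<alpha>" by (rule ssys_GL_s)
  have gs: "gsys ?S" by (rule gsys_GL_s)
  have e: "(N, z \<cdot>\<^sub>m 1\<^sub>m N) \<in> lim_carrier ?S" "central ?S (N, z \<cdot>\<^sub>m 1\<^sub>m N)" "z \<noteq> 0"
    using scalar_elem[OF S N zN] by auto
  have a: "(N, shf N) \<in> lim_carrier ?S" using N shf_GL unfolding lim_carrier_def by simp
  have b: "(N, clk N z) \<in> lim_carrier ?S" using N clk_GL[OF e(3)] unfolding lim_carrier_def by simp
  have ab: "(N, shf N * clk N z) \<in> lim_carrier ?S" and ba: "(N, clk N z * shf N) \<in> lim_carrier ?S"
    using gsys.g_mult[OF gs] gsys.carrierI[OF gs] a b gsys.carrierD[OF gs] by (metis fst_conv snd_conv)+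
  have zb: "(N, z \<cdot>\<^sub>m 1\<^sub>m N * (clk N z * shf N)) \<in> lim_carrier ?S"
    using gsys.g_mult[OF gs] gsys.carrierI[OF gs] e(1) ba gsys.carrierD[OF gs] by (metis fst_conv snd_conv)
  have "eqc ?S (mul ?S (N, shf N) (N, clk N z)) (N, shf N * clk N z)"
    using gsys.eqcI[OF gs gsys.mul_carrier[OF gs a b] ab gsys.mul_at_same[OF gs a b]] .
  also have "(N, shf N * clk N z) = (N, z \<cdot>\<^sub>m 1\<^sub>m N * (clk N z * shf N))"
  proof -
    have cm: "clk N z * shf N \<in> carrier_mat N N" using mult_carrier_mat[OF clk_carrier shf_carrier] .
    have "z \<cdot>\<^sub>m 1\<^sub>m N * (clk N z * shf N) = z \<cdot>\<^sub>m (clk N z * shf N)" using smult_one_mult[OF cm] .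
    then show ?thesis using clk_shf[OF zN] by simp
  qed
  also have "eqc ?S (N, z \<cdot>\<^sub>m 1\<^sub>m N * (clk N z * shf N)) (mul ?S (N, z \<cdot>\<^sub>m 1\<^sub>m N) (N, clk N z * shf N))"
    using gsys.eqcI[OF gs zb gsys.mul_carrier[OF gs e(1) ba] gsys.eq_sym[OF gs gsys.mul_at_same[OF gs e(1) ba]]] .
  also have "eqc ?S (mul ?S (N, z \<cdot>\<^sub>m 1\<^sub>m N) (N, clk N z * shf N)) (mul ?S (N, z \<cdot>\<^sub>m 1\<^sub>m N) (mul ?S (N, clk N z) (N, shf N)))"
    using gsys.mul_congc[OF gs gsys.eqc_refl[OF gs e(1)]
       gsys.eqcI[OF gs ba gsys.mul_carrier[OF gs b a] gsys.eq_sym[OF gs gsys.mul_at_same[OF gs b a]]]] .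
  finally have "lim_eq ?S (mul ?S (N, shf N) (N, clk N z)) (mul ?S (N, z \<cdot>\<^sub>m 1\<^sub>m N) (mul ?S (N, clk N z) (N, shf N)))"
    using gsys.eqcD[OF gs] by blast
  then show ?thesis unfolding InvG_def using e(2) a b by blast
qed

lemma inf_central:
  fixes T :: "'a::field mat_system"
  assumes gs: "gsys T" and idT: "idx T = {n. n \<ge> 1}" and leT: "le T = (\<le>)" and emT: "emb T = std_emb"
    and em: "\<And>n i j. i \<noteq> j \<Longrightarrow> emat n i j \<in> grp T n" and c: "central T y"
  shows "snd y = 1\<^sub>m (fst y)"
proof -
  obtain m W where ye: "y = (m, W)" by (cases y)
  have y: "(m, W) \<in> lim_carrier T" using c ye central_def by blast
  have mi: "m \<in> idx T" and Wg: "W \<in> grp T m" using gsys.carrierD[OF gs y] by auto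
  have Wc: "W \<in> carrier_mat m m" using gsys.g_carr[OF gs mi Wg] .
  have li: "Suc m \<in> idx T" and le: "le T m (Suc m)" using idT leT by auto
  have lf: "(Suc m, std_emb m (Suc m) W) \<in> lim_carrier T" "lim_eq T (m, W) (Suc m, std_emb m (Suc m) W)"
    using gsys.lift[OF gs y, of "Suc m"] li le emT by auto
  have c': "central T (Suc m, std_emb m (Suc m) W)"
    using gsys.central_cong[OF gs c[unfolded ye] lf] .
  have sc: "std_emb m (Suc m) W = (std_emb m (Suc m) W) $$ (0, 0) \<cdot>\<^sub>m 1\<^sub>m (Suc m)"
    using central_scalar[OF gs c' _ em] by blast
  define d where "d = (std_emb m (Suc m) W) $$ (0, 0)"
  have "(std_emb m (Suc m) W) $$ (m, m) = 1" by (simp add: std_emb_index)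
  moreover have "(std_emb m (Suc m) W) $$ (m, m) = d"
    using arg_cong[OF sc, of "\<lambda>A. A $$ (m, m)"] d_def by simp
  ultimately have d1: "d = 1" by simp
  have one: "1 \<cdot>\<^sub>m 1\<^sub>m (Suc m) = (1\<^sub>m (Suc m) :: 'a mat)" by (rule eq_matI) auto
  have "std_emb m (Suc m) W = 1\<^sub>m (Suc m)"
    using sc d1 d_def one by simp
  also have "\<dots> = std_emb m (Suc m) (1\<^sub>m m)" by (simp add: std_emb_one)
  finally have "W = 1\<^sub>m m" using std_emb_inj[of m "Suc m" W "1\<^sub>m m"] Wc by simp
  then show ?thesis using ye by simp
qed

lemma one_pow_mat: "(1\<^sub>m m :: 'a::field mat) ^\<^sub>m k = 1\<^sub>m m"
  by (induction k) simp_all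

lemma prime_diff:
  assumes a: "supernatural \<alpha>" and b: "supernatural \<beta>" and ne: "\<alpha> \<noteq> \<beta>"
  shows "\<exists>p. prime p \<and> \<alpha> p \<noteq> \<beta> p"
proof -
  obtain q where q: "\<alpha> q \<noteq> \<beta> q" using ne by blast
  then have "prime q" using a b unfolding supernatural_def by metis
  then show ?thesis using q by blast
qed

lemma enat_succ_le: "b < (x::enat) \<Longrightarrow> b = enat k \<Longrightarrow> enat (Suc k) \<le> x"
  using Suc_ile_eq by blast

lemma part_a_GL:
  assumes a: "supernatural \<alpha>" and b: "supernatural \<beta>" and ne: "\<alpha> \<noteq> \<beta>"
  shows "\<not> ind_group_iso (GL_s \<alpha> :: 'a::{alg_closed_field, field_char_0} mat_system) (GL_s \<beta>)"
proof
  let ?S = "GL_s \<alpha> :: 'a mat_system" and ?T = "GL_s \<beta> :: 'a mat_system"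
  assume iso: "ind_group_iso ?S ?T"
  obtain F G where gi: "giso ?S ?T F G" using giso_of[OF gsys_GL_s gsys_GL_s iso] by blast
  have sS: "ssys ?S \<alpha>" and sT: "ssys ?T \<beta>" by (rule ssys_GL_s)+
  obtain p where p: "prime p" and pne: "\<alpha> p \<noteq> \<beta> p" using prime_diff[OF a b ne] by blast
  show False
  proof (cases "\<beta> p < \<alpha> p")
    case True
    then obtain k where k: "\<beta> p = enat k" by (cases "\<beta> p") auto
    have le: "enat (Suc k) \<le> \<alpha> p" using enat_succ_le[OF True k] .
    obtain z :: 'a where z: "z ^ (p ^ Suc k) = 1" and xc: "(p ^ Suc k, z \<cdot>\<^sub>m 1\<^sub>m (p ^ Suc k)) \<in> lim_carrier ?S"
      and o1: "ordx ?S (p ^ Suc k, z \<cdot>\<^sub>m 1\<^sub>m (p ^ Suc k)) (p ^ Suc k)"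
      and o2: "\<not> ordx ?S (p ^ Suc k, z \<cdot>\<^sub>m 1\<^sub>m (p ^ Suc k)) (p ^ k)"
      using exist_central[OF sS p le] by blast
    let ?x = "(p ^ Suc k, z \<cdot>\<^sub>m 1\<^sub>m (p ^ Suc k))"
    have N: "p ^ Suc k \<in> sdivisors \<alpha>" using ppow_sdiv[of p k \<alpha>] p le by blast
    have inv: "InvG ?S ?x" using exist_InvG[OF N z] .
    have invT: "InvG ?T (F ?x)" using giso.InvG_F[OF gi inv] .
    have fx: "F ?x \<in> lim_carrier ?T" using giso.F_carr[OF gi xc] .
    have o1': "ordx ?T (F ?x) (p ^ Suc k)" and o2': "\<not> ordx ?T (F ?x) (p ^ k)"
      using giso.ord_F[OF gi xc] o1 o2 by auto
    obtain c l where cl: "c \<noteq> 0" "snd (F ?x) = c \<cdot>\<^sub>m 1\<^sub>m (fst (F ?x))" "l \<in> sdivisors \<beta>" "c ^ l = 1"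
      using ssys.InvG_tors[OF sT invT] by blast
    have "enat (Suc k) \<le> \<beta> p" using ssys.bound[OF sT fx cl(2) cl(1) cl(3) cl(4) p o1' o2'] .
    then show False using k by simp
  next
    case False
    then have lt: "\<alpha> p < \<beta> p" using pne by (simp add: not_less order.order_iff_strict)
    then obtain k where k: "\<alpha> p = enat k" by (cases "\<alpha> p") auto
    have le: "enat (Suc k) \<le> \<beta> p" using enat_succ_le[OF lt k] .
    obtain z :: 'a where z: "z ^ (p ^ Suc k) = 1" and yc: "(p ^ Suc k, z \<cdot>\<^sub>m 1\<^sub>m (p ^ Suc k)) \<in> lim_carrier ?T"
      and o1: "ordx ?T (p ^ Suc k, z \<cdot>\<^sub>m 1\<^sub>m (p ^ Suc k)) (p ^ Suc k)"
      and o2: "\<not> ordx ?T (p ^ Suc k, z \<cdot>\<^sub>m 1\<^sub>m (p ^ Suc k)) (p ^ k)"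
      using exist_central[OF sT p le] by blast
    let ?y = "(p ^ Suc k, z \<cdot>\<^sub>m 1\<^sub>m (p ^ Suc k))"
    have N: "p ^ Suc k \<in> sdivisors \<beta>" using ppow_sdiv[of p k \<beta>] p le by blast
    have inv: "InvG ?T ?y" using exist_InvG[OF N z] .
    have invS: "InvG ?S (G ?y)" using giso.InvG_G[OF gi inv] .
    have gy: "G ?y \<in> lim_carrier ?S" using giso.G_carr[OF gi yc] .
    have o1': "ordx ?S (G ?y) (p ^ Suc k)" and o2': "\<not> ordx ?S (G ?y) (p ^ k)"
      using giso.ord_G[OF gi yc] o1 o2 by auto
    obtain c l where cl: "c \<noteq> 0" "snd (G ?y) = c \<cdot>\<^sub>m 1\<^sub>m (fst (G ?y))" "l \<in> sdivisors \<alpha>" "c ^ l = 1"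
      using ssys.InvG_tors[OF sS invS] by blast
    have "enat (Suc k) \<le> \<alpha> p" using ssys.bound[OF sS gy cl(2) cl(1) cl(3) cl(4) p o1' o2'] .
    then show False using k by simp
  qed
qed

lemma part_a_SL:
  assumes a: "supernatural \<alpha>" and b: "supernatural \<beta>" and ne: "\<alpha> \<noteq> \<beta>"
  shows "\<not> ind_group_iso (SL_s \<alpha> :: 'a::{alg_closed_field, field_char_0} mat_system) (SL_s \<beta>)"
proof
  let ?S = "SL_s \<alpha> :: 'a mat_system" and ?T = "SL_s \<beta> :: 'a mat_system"
  assume iso: "ind_group_iso ?S ?T"
  obtain F G where gi: "giso ?S ?T F G" using giso_of[OF gsys_SL_s gsys_SL_s iso] by blast
  have sS: "ssys ?S \<alpha>" and sT: "ssys ?T \<beta>" by (rule ssys_SL_s)+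
  obtain p where p: "prime p" and pne: "\<alpha> p \<noteq> \<beta> p" using prime_diff[OF a b ne] by blast
  show False
  proof (cases "\<beta> p < \<alpha> p")
    case True
    then obtain k where k: "\<beta> p = enat k" by (cases "\<beta> p") auto
    have le: "enat (Suc k) \<le> \<alpha> p" using enat_succ_le[OF True k] .
    obtain z :: 'a where xc: "(p ^ Suc k, z \<cdot>\<^sub>m 1\<^sub>m (p ^ Suc k)) \<in> lim_carrier ?S"
      and inv: "central ?S (p ^ Suc k, z \<cdot>\<^sub>m 1\<^sub>m (p ^ Suc k))"
      and o1: "ordx ?S (p ^ Suc k, z \<cdot>\<^sub>m 1\<^sub>m (p ^ Suc k)) (p ^ Suc k)"
      and o2: "\<not> ordx ?S (p ^ Suc k, z \<cdot>\<^sub>m 1\<^sub>m (p ^ Suc k)) (p ^ k)"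
      using exist_central[OF sS p le] by blast
    let ?x = "(p ^ Suc k, z \<cdot>\<^sub>m 1\<^sub>m (p ^ Suc k))"
    have invT: "central ?T (F ?x)" using giso.central_F[OF gi inv] .
    have fx: "F ?x \<in> lim_carrier ?T" using giso.F_carr[OF gi xc] .
    have o1': "ordx ?T (F ?x) (p ^ Suc k)" and o2': "\<not> ordx ?T (F ?x) (p ^ k)"
      using giso.ord_F[OF gi xc] o1 o2 by auto
    obtain c l where cl: "c \<noteq> 0" "snd (F ?x) = c \<cdot>\<^sub>m 1\<^sub>m (fst (F ?x))" "l \<in> sdivisors \<beta>" "c ^ l = 1"
      using SL_tors[OF invT] by blast
    have "enat (Suc k) \<le> \<beta> p" using ssys.bound[OF sT fx cl(2) cl(1) cl(3) cl(4) p o1' o2'] .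
    then show False using k by simp
  next
    case False
    then have lt: "\<alpha> p < \<beta> p" using pne by (simp add: not_less order.order_iff_strict)
    then obtain k where k: "\<alpha> p = enat k" by (cases "\<alpha> p") auto
    have le: "enat (Suc k) \<le> \<beta> p" using enat_succ_le[OF lt k] .
    obtain z :: 'a where yc: "(p ^ Suc k, z \<cdot>\<^sub>m 1\<^sub>m (p ^ Suc k)) \<in> lim_carrier ?T"
      and inv: "central ?T (p ^ Suc k, z \<cdot>\<^sub>m 1\<^sub>m (p ^ Suc k))"
      and o1: "ordx ?T (p ^ Suc k, z \<cdot>\<^sub>m 1\<^sub>m (p ^ Suc k)) (p ^ Suc k)"
      and o2: "\<not> ordx ?T (p ^ Suc k, z \<cdot>\<^sub>m 1\<^sub>m (p ^ Suc k)) (p ^ k)"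
      using exist_central[OF sT p le] by blast
    let ?y = "(p ^ Suc k, z \<cdot>\<^sub>m 1\<^sub>m (p ^ Suc k))"
    have invS: "central ?S (G ?y)" using giso.central_G[OF gi inv] .
    have gy: "G ?y \<in> lim_carrier ?S" using giso.G_carr[OF gi yc] .
    have o1': "ordx ?S (G ?y) (p ^ Suc k)" and o2': "\<not> ordx ?S (G ?y) (p ^ k)"
      using giso.ord_G[OF gi yc] o1 o2 by auto
    obtain c l where cl: "c \<noteq> 0" "snd (G ?y) = c \<cdot>\<^sub>m 1\<^sub>m (fst (G ?y))" "l \<in> sdivisors \<alpha>" "c ^ l = 1"
      using SL_tors[OF invS] by blast
    have "enat (Suc k) \<le> \<alpha> p" using ssys.bound[OF sS gy cl(2) cl(1) cl(3) cl(4) p o1' o2'] .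
    then show False using k by simp
  qed
qed

lemma inf_prime:
  assumes a: "infinite_supernatural \<alpha>"
  shows "\<exists>p. prime p \<and> enat (Suc 0) \<le> \<alpha> p"
proof -
  have ex: "\<exists>p. prime p \<and> \<alpha> p \<noteq> 0"
  proof (cases "\<exists>p. prime p \<and> \<alpha> p = \<infinity>")
    case True
    then obtain p where p: "prime p" "\<alpha> p = \<infinity>" by blast
    then show ?thesis by (intro exI[of _ p]) simp
  next
    case False
    then have inf: "infinite {p. prime p \<and> \<alpha> p \<noteq> 0}" using a unfolding infinite_supernatural_def by blast
    obtain p where "p \<in> {p. prime p \<and> \<alpha> p \<noteq> 0}" using infinite_imp_nonempty[OF inf] by blast
    then show ?thesis by blast
  qed
  then obtain p where p: "prime p" "\<alpha> p \<noteq> 0" by blast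
  have "0 < \<alpha> p" using p(2) by (simp add: gr_zeroI)
  then have "enat 0 < \<alpha> p" by (simp add: zero_enat_def)
  then have "enat (Suc 0) \<le> \<alpha> p" by (simp only: Suc_ile_eq)
  then show ?thesis using p by blast
qed

lemma part_b:
  fixes S T :: "'a::{alg_closed_field, field_char_0} mat_system"
  assumes sS: "ssys S \<alpha>" and inf: "infinite_supernatural \<alpha>"
    and gT: "gsys T" and idT: "idx T = {n. n \<ge> 1}" and leT: "le T = (\<le>)" and emT: "emb T = std_emb"
    and em: "\<And>n i j. i \<noteq> j \<Longrightarrow> emat n i j \<in> grp T n"
  shows "\<not> ind_group_iso S T"
proof
  assume iso: "ind_group_iso S T"
  obtain F G where gi: "giso S T F G" using giso_of[OF ssys.axioms(1)[OF sS] gT iso] by blast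
  obtain p where p: "prime p" and le: "enat (Suc 0) \<le> \<alpha> p" using inf_prime[OF inf] by blast
  obtain z :: 'a where xc: "(p ^ Suc 0, z \<cdot>\<^sub>m 1\<^sub>m (p ^ Suc 0)) \<in> lim_carrier S"
    and inv: "central S (p ^ Suc 0, z \<cdot>\<^sub>m 1\<^sub>m (p ^ Suc 0))"
    and o2: "\<not> ordx S (p ^ Suc 0, z \<cdot>\<^sub>m 1\<^sub>m (p ^ Suc 0)) (p ^ 0)"
    using exist_central[OF sS p le] by blast
  let ?x = "(p ^ Suc 0, z \<cdot>\<^sub>m 1\<^sub>m (p ^ Suc 0))"
  have cT: "central T (F ?x)" using giso.central_F[OF gi inv] .
  have fx: "F ?x \<in> lim_carrier T" using giso.F_carr[OF gi xc] .
  have s1: "snd (F ?x) = 1\<^sub>m (fst (F ?x))" using inf_central[OF gT idT leT emT em cT] .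
  obtain m W where fxe: "F ?x = (m, W)" by (cases "F ?x")
  have "W = 1\<^sub>m m" using s1 fxe by simp
  then have "pw (F ?x) (Suc 1) = F ?x" unfolding pw_def using fxe one_pow_mat[of m "Suc 1"] by simp
  then have "ordx T (F ?x) 1" unfolding ordx_def using gsys.eq_refl[OF gT fx] by simp
  then have "ordx S ?x 1" using giso.ord_F[OF gi xc] by blast
  then show False using o2 by simp
qed

theorem proposition2p5:
  shows "(\<forall>\<alpha> \<beta>. supernatural \<alpha> \<and> supernatural \<beta> \<and> infinite_supernatural \<alpha> \<and>
            infinite_supernatural \<beta> \<and> \<alpha> \<noteq> \<beta> \<longrightarrow>
            \<not> ind_group_iso (GL_s \<alpha> :: 'a::{alg_closed_field, field_char_0} mat_system) (GL_s \<beta>) \<and>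
            \<not> ind_group_iso (SL_s \<alpha> :: 'a mat_system) (SL_s \<beta>))
       \<and> (\<forall>\<alpha>. supernatural \<alpha> \<and> infinite_supernatural \<alpha> \<longrightarrow>
            \<not> ind_group_iso (GL_s \<alpha> :: 'a mat_system) GL_inf \<and>
            \<not> ind_group_iso (SL_s \<alpha> :: 'a mat_system) SL_inf)"
proof (intro conjI allI impI)
  fix \<alpha> \<beta> :: "nat \<Rightarrow> enat"
  assume h: "supernatural \<alpha> \<and> supernatural \<beta> \<and> infinite_supernatural \<alpha> \<and>
            infinite_supernatural \<beta> \<and> \<alpha> \<noteq> \<beta>"
  show "\<not> ind_group_iso (GL_s \<alpha> :: 'a mat_system) (GL_s \<beta>)" using part_a_GL h by blast
  show "\<not> ind_group_iso (SL_s \<alpha> :: 'a mat_system) (SL_s \<beta>)" using part_a_SL h by blast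
next
  fix \<alpha> :: "nat \<Rightarrow> enat"
  assume h: "supernatural \<alpha> \<and> infinite_supernatural \<alpha>"
  show "\<not> ind_group_iso (GL_s \<alpha> :: 'a mat_system) GL_inf"
    by (rule part_b[OF ssys_GL_s _ gsys_GL_inf]) (use h emat_GL in simp_all)
  show "\<not> ind_group_iso (SL_s \<alpha> :: 'a mat_system) SL_inf"
    by (rule part_b[OF ssys_SL_s _ gsys_SL_inf]) (use h emat_SL in simp_all)
qed

end
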